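(* Let $\mathbb{F}$ be a field with $\mathrm{char}(\mathbb{F})\neq 2,3$. Then the automorphism group $\mathrm{Aut}(\hat{\mathcal{H}})$ is isomorphic to the infinite dihedral group $D$.
   Context: Notation: $\mathbb{N}=\{1,2,3,\dots\}$, $3\mathbb{N}=\{3,6,9,\dots\}$; for $r\in\mathbb{Z}$, $\bar r=r+3\mathbb{Z}\in\mathbb{Z}_3$. The algebra $\hat{\mathcal{H}}$ is the commutative $\mathbb{F}$-algebra with basis $\{a_i:i\in\mathbb{Z}\}\cup\{s_j:j\in\mathbb{N}\}\cup\{p_{\bar r,k}:\bar r\in\{\bar1,\bar2\},\ k\in 3\mathbb{N}\}$, where $s_0=0$, $p_{\bar r,j}=0$ for all $\bar r$ whenever $j\notin 3\mathbb{N}$, $p_{\bar 0,j}=-p_{\bar1,j}-p_{\bar2,j}$, $z_{\bar r,j}=p_{\bar r+\bar1,j}-p_{\bar r-\bar1,j}$, and for $i,i'\in\mathbb{Z}$, $j,l\in\mathbb{N}$, $h,k\in3\mathbb{N}$, $\bar r,\bar t\in\mathbb{Z}_3$: (H1) $a_ia_{i'}=\tfrac12(a_i+a_{i'})+s_{|i-i'|}+z_{\bar\imath,|i-i'|}$; (H2) $a_is_j=-\tfrac34a_i+\tfrac38(a_{i-j}+a_{i+j})+\tfrac32 s_j-z_{\bar\imath,j}$; (H3) $a_ip_{\bar r,k}=\tfrac32p_{\bar r,k}-p_{-(\bar\imath+\bar r),k}$; (H4) $s_js_l=\tfrac34(s_j+s_l)-\tfrac38(s_{|j-l|}+s_{j+l})$;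 (H5) $s_jp_{\bar r,k}=\tfrac34(p_{\bar r,j}+p_{\bar r,k})-\tfrac38(p_{\bar r,|j-k|}+p_{\bar r,j+k})$; (H6) $p_{\bar r,h}p_{\bar t,k}=\tfrac14(z_{-(\bar r+\bar t),h}+z_{-(\bar r+\bar t),k})-\tfrac18(z_{-(\bar r+\bar t),|h-k|}+z_{-(\bar r+\bar t),h+k})$. $D=\langle\tau_0,\tau_{1/2}\rangle$ is the infinite dihedral group generated by the reflections $\tau_0:i\mapsto -i$ and $\tau_{1/2}:i\mapsto 1-i$ of $\mathbb{Z}$. *)

theory Defs
  imports "HOL-Algebra.Bij" "HOL-Algebra.Generated_Groups" "HOL-Library.Function_Algebras"
begin

text \<open>Basis labels of the algebra hat-H: A i is a_i (i in Z), S j is s_j (j >= 1),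
  P r k is p_{r,k} (r in {1,2}, k in 3N).\<close>

datatype hidx = A int | S nat | P int nat

fun valid_idx :: "hidx \<Rightarrow> bool" where
  "valid_idx (A i) = True"
| "valid_idx (S j) = (j \<ge> 1)"
| "valid_idx (P r k) = (r \<in> {1, 2} \<and> 3 dvd k \<and> k > 0)"

definition hsupp :: "(hidx \<Rightarrow> 'a::field) \<Rightarrow> hidx set" where
  "hsupp v = {b. v b \<noteq> 0}"

definition Hcarrier :: "(hidx \<Rightarrow> 'a::field) set" where
  "Hcarrier = {v. finite (hsupp v) \<and> (\<forall>b\<in>hsupp v. valid_idx b)}"

definition evec :: "hidx \<Rightarrow> hidx \<Rightarrow> 'a::field" where
  "evec b = (\<lambda>c. if c = b then 1 else 0)"

definition vsc :: "'a::field \<Rightarrow> (hidx \<Rightarrow> 'a) \<Rightarrow> hidx \<Rightarrow> 'a" where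
  "vsc c v = (\<lambda>b. c * v b)"

definition aV :: "int \<Rightarrow> hidx \<Rightarrow> 'a::field" where
  "aV i = evec (A i)"

definition sV :: "nat \<Rightarrow> hidx \<Rightarrow> 'a::field" where
  "sV j = (if j = 0 then 0 else evec (S j))"

definition pV :: "int \<Rightarrow> nat \<Rightarrow> hidx \<Rightarrow> 'a::field" where
  "pV r j = (if 3 dvd j \<and> j > 0 then
      (if r mod 3 = 1 then evec (P 1 j)
       else if r mod 3 = 2 then evec (P 2 j)
       else - evec (P 1 j) - evec (P 2 j))
    else 0)"

definition zV :: "int \<Rightarrow> nat \<Rightarrow> hidx \<Rightarrow> 'a::field" where
  "zV r j = pV (r + 1) j - pV (r - 1) j"

definition nd :: "int \<Rightarrow> int \<Rightarrow> nat" where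
  "nd x y = nat \<bar>x - y\<bar>"

text \<open>Products of basis elements, (H1)-(H6), extended symmetrically.\<close>
fun bmul :: "hidx \<Rightarrow> hidx \<Rightarrow> hidx \<Rightarrow> 'a::field" where
  "bmul (A i) (A i') =
     vsc (1/2) (aV i + aV i') + sV (nd i i') + zV i (nd i i')"
| "bmul (A i) (S j) =
     vsc (-3/4) (aV i) + vsc (3/8) (aV (i - int j) + aV (i + int j)) + vsc (3/2) (sV j) - zV i j"
| "bmul (S j) (A i) =
     vsc (-3/4) (aV i) + vsc (3/8) (aV (i - int j) + aV (i + int j)) + vsc (3/2) (sV j) - zV i j"
| "bmul (A i) (P r k) = vsc (3/2) (pV r k) - pV (- (i + r)) k"
| "bmul (P r k) (A i) = vsc (3/2) (pV r k) - pV (- (i + r)) k"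
| "bmul (S j) (S l) =
     vsc (3/4) (sV j + sV l) - vsc (3/8) (sV (nd (int j) (int l)) + sV (j + l))"
| "bmul (S j) (P r k) =
     vsc (3/4) (pV r j + pV r k) - vsc (3/8) (pV r (nd (int j) (int k)) + pV r (j + k))"
| "bmul (P r k) (S j) =
     vsc (3/4) (pV r j + pV r k) - vsc (3/8) (pV r (nd (int j) (int k)) + pV r (j + k))"
| "bmul (P r h) (P t k) =
     vsc (1/4) (zV (- (r + t)) h + zV (- (r + t)) k)
     - vsc (1/8) (zV (- (r + t)) (nd (int h) (int k)) + zV (- (r + t)) (h + k))"

definition hmul :: "(hidx \<Rightarrow> 'a::field) \<Rightarrow> (hidx \<Rightarrow> 'a) \<Rightarrow> hidx \<Rightarrow> 'a" where
  "hmul x y = (\<lambda>c. \<Sum>b\<in>hsupp x. \<Sum>b'\<in>hsupp y. x b * y b' * bmul b b' c)"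

definition Hauts :: "((hidx \<Rightarrow> 'a::field) \<Rightarrow> (hidx \<Rightarrow> 'a)) set" where
  "Hauts = {\<phi>. \<phi> \<in> extensional Hcarrier \<and> bij_betw \<phi> Hcarrier Hcarrier
      \<and> (\<forall>x\<in>Hcarrier. \<forall>y\<in>Hcarrier. \<phi> (x + y) = \<phi> x + \<phi> y)
      \<and> (\<forall>c. \<forall>x\<in>Hcarrier. \<phi> (vsc c x) = vsc c (\<phi> x))
      \<and> (\<forall>x\<in>Hcarrier. \<forall>y\<in>Hcarrier. \<phi> (hmul x y) = hmul (\<phi> x) (\<phi> y))}"

definition HAutGroup :: "((hidx \<Rightarrow> 'a::field) \<Rightarrow> (hidx \<Rightarrow> 'a)) monoid" where
  "HAutGroup = BijGroup Hcarrier \<lparr>carrier := Hauts\<rparr>"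

definition tau0 :: "int \<Rightarrow> int" where "tau0 = (\<lambda>i. - i)"
definition tau_half :: "int \<Rightarrow> int" where "tau_half = (\<lambda>i. 1 - i)"

definition DGroup :: "(int \<Rightarrow> int) monoid" where
  "DGroup = BijGroup (UNIV :: int set)
     \<lparr>carrier := generate (BijGroup (UNIV :: int set)) {tau0, tau_half}\<rparr>"

end

theory Submission
  imports Defs
begin

lemma sum_fun_apply: "(\<Sum>i\<in>I. f i) x = (\<Sum>i\<in>I. f i x)"
  by (induct I rule: infinite_finite_induct) auto

lemma vsc_apply[simp]: "vsc c v b = c * v b" by (simp add: vsc_def)
lemma evec_apply[simp]: "evec b c = (if c = b then 1 else 0)" by (simp add: evec_def)
lemma aV_apply[simp]: "aV i b = (if b = A i then 1 else 0)" by (simp add: aV_def)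
lemma sV_apply[simp]: "sV j b = (if j \<noteq> 0 \<and> b = S j then 1 else 0)" by (simp add: sV_def)

definition pcoef :: "int \<Rightarrow> int \<Rightarrow> 'a::field" where
  "pcoef r t = (if t = 1 then (if r mod 3 = 1 then 1 else if r mod 3 = 2 then 0 else -1)
               else if t = 2 then (if r mod 3 = 1 then 0 else if r mod 3 = 2 then 1 else -1) else 0)"

lemma pV_A[simp]: "pV r j (A i) = 0" by (simp add: pV_def)
lemma pV_S[simp]: "pV r j (S l) = 0" by (simp add: pV_def)
lemma pV_P[simp]: "pV r j (P t m) = (if 3 dvd j \<and> 0 < j \<and> m = j then pcoef r t else 0)"
  by (auto simp add: pV_def pcoef_def)
lemma zV_A[simp]: "zV r j (A i) = 0" by (simp add: zV_def)
lemma zV_S[simp]: "zV r j (S l) = 0" by (simp add: zV_def)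
lemma zV_P[simp]: "zV r j (P t m) = (if 3 dvd j \<and> 0 < j \<and> m = j then pcoef (r+1) t - pcoef (r - 1) t else 0)"
  by (auto simp add: zV_def)

lemma pV_cong: "r mod 3 = r' mod 3 \<Longrightarrow> pV r k = pV r' k"
  by (simp add: pV_def)
lemma pcoef_cong: "r mod 3 = r' mod 3 \<Longrightarrow> pcoef r t = pcoef r' t"
  by (simp add: pcoef_def)

lemma pV_0[simp]: "pV r 0 = 0" by (simp add: pV_def)
lemma zV_0[simp]: "zV r 0 = 0" by (simp add: zV_def)
lemma sV_0[simp]: "sV 0 = 0" by (simp add: sV_def)

lemma hsupp_iff: "b \<in> hsupp v \<longleftrightarrow> v b \<noteq> 0" by (simp add: hsupp_def)

lemma HcarrierI: "finite (hsupp v) \<Longrightarrow> (\<And>b. v b \<noteq> 0 \<Longrightarrow> valid_idx b) \<Longrightarrow> v \<in> Hcarrier"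
  by (auto simp: Hcarrier_def hsupp_def)
lemma HcarrierD: "v \<in> Hcarrier \<Longrightarrow> finite (hsupp v)" "v \<in> Hcarrier \<Longrightarrow> v b \<noteq> 0 \<Longrightarrow> valid_idx b"
  by (auto simp: Hcarrier_def hsupp_def)
lemma Hcarrier_invalid: "v \<in> Hcarrier \<Longrightarrow> \<not> valid_idx b \<Longrightarrow> v b = 0"
  using HcarrierD(2) by blast

lemma hsupp_add: "hsupp (x + y) \<subseteq> hsupp x \<union> hsupp y" by (auto simp: hsupp_def)
lemma hsupp_diff: "hsupp (x - y) \<subseteq> hsupp x \<union> hsupp y" by (auto simp: hsupp_def)
lemma hsupp_uminus: "hsupp (- x) = hsupp x" by (auto simp: hsupp_def)
lemma hsupp_vsc: "hsupp (vsc c x) \<subseteq> hsupp x" by (auto simp: hsupp_def)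

lemma Hc_add[intro]: "x \<in> Hcarrier \<Longrightarrow> y \<in> Hcarrier \<Longrightarrow> x + y \<in> Hcarrier"
  apply (rule HcarrierI)
  apply (meson HcarrierD(1) finite_UnI hsupp_add rev_finite_subset)
  by (metis HcarrierD(2) add.right_neutral add_0 plus_fun_apply)
lemma Hc_diff[intro]: "x \<in> Hcarrier \<Longrightarrow> y \<in> Hcarrier \<Longrightarrow> x - y \<in> Hcarrier"
  apply (rule HcarrierI)
  apply (meson HcarrierD(1) finite_UnI hsupp_diff rev_finite_subset)
  by (metis HcarrierD(2) diff_self minus_apply diff_zero)
lemma Hc_uminus[intro]: "x \<in> Hcarrier \<Longrightarrow> - x \<in> Hcarrier"
  apply (rule HcarrierI)
  apply (simp add: HcarrierD(1) hsupp_uminus)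
  by (metis HcarrierD(2) neg_equal_0_iff_equal uminus_apply)
lemma Hc_vsc[intro]: "x \<in> Hcarrier \<Longrightarrow> vsc c x \<in> Hcarrier"
  apply (rule HcarrierI)
  apply (meson HcarrierD(1) hsupp_vsc rev_finite_subset)
  by (metis HcarrierD(2) mult_zero_right vsc_apply)
lemma Hc_zero[intro]: "(0 :: hidx \<Rightarrow> 'a::field) \<in> Hcarrier"
  by (rule HcarrierI) (auto simp: hsupp_def)
lemma Hc_sum[intro]: "(\<And>i. i \<in> I \<Longrightarrow> f i \<in> Hcarrier) \<Longrightarrow> sum f I \<in> Hcarrier"
  by (induct I rule: infinite_finite_induct) auto
lemma Hc_evec[intro]: "valid_idx b \<Longrightarrow> (evec b :: hidx \<Rightarrow> 'a::field) \<in> Hcarrier"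
  by (rule HcarrierI) (auto simp: hsupp_def split: if_splits)
lemma Hc_aV[intro]: "aV i \<in> Hcarrier" unfolding aV_def by auto
lemma Hc_sV[intro]: "sV j \<in> Hcarrier" unfolding sV_def by auto
lemma Hc_pV[intro]: "pV r j \<in> Hcarrier" unfolding pV_def by (auto intro!: Hc_diff Hc_uminus Hc_evec)
lemma Hc_zV[intro]: "zV r j \<in> Hcarrier" unfolding zV_def by auto
lemma Hc_bmul[intro]: "bmul b b' \<in> Hcarrier"
  by (cases b; cases b') (simp_all add: Hc_add Hc_diff Hc_vsc Hc_aV Hc_sV Hc_pV Hc_zV)

lemma hmul_eq:
  assumes "finite F" "hsupp x \<subseteq> F" "finite G" "hsupp y \<subseteq> G"
  shows "hmul x y c = (\<Sum>b\<in>F. \<Sum>b'\<in>G. x b * y b' * bmul b b' c)"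
proof -
  have "hmul x y c = (\<Sum>b\<in>hsupp x. \<Sum>b'\<in>G. x b * y b' * bmul b b' c)"
    unfolding hmul_def
    apply (rule sum.cong[OF refl])
    apply (rule sum.mono_neutral_left[OF assms(3,4)])
    by (auto simp: hsupp_def)
  also have "\<dots> = (\<Sum>b\<in>F. \<Sum>b'\<in>G. x b * y b' * bmul b b' c)"
    apply (rule sum.mono_neutral_left[OF assms(1,2)])
    by (auto simp: hsupp_def)
  finally show ?thesis .
qed

lemma hmul_fun:
  assumes "finite F" "hsupp x \<subseteq> F" "finite G" "hsupp y \<subseteq> G"
  shows "hmul x y = (\<Sum>b\<in>F. \<Sum>b'\<in>G. vsc (x b * y b') (bmul b b'))"
  using hmul_eq[OF assms] by (simp add: fun_eq_iff sum_fun_apply)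

lemma Hc_hmul[intro]: "x \<in> Hcarrier \<Longrightarrow> y \<in> Hcarrier \<Longrightarrow> hmul x y \<in> Hcarrier"
  by (subst hmul_fun[OF HcarrierD(1) order_refl HcarrierD(1) order_refl]) (auto intro!: Hc_sum Hc_vsc)

lemma hmul_add_left:
  assumes "x \<in> Hcarrier" "y \<in> Hcarrier" "z \<in> Hcarrier"
  shows "hmul (x + y) z = hmul x z + hmul y z"
proof -
  have f: "finite (hsupp x \<union> hsupp y)" "finite (hsupp z)" using assms HcarrierD(1) by auto
  show ?thesis
    apply (rule ext)
    apply (simp only: plus_fun_apply)
    apply (subst (1 2 3) hmul_eq[OF f(1) _ f(2) order_refl])
    using hsupp_add apply auto[3]
    by (simp add: sum.distrib[symmetric] distrib_right)
qed

lemma hmul_vsc_left: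
  assumes "x \<in> Hcarrier" "z \<in> Hcarrier"
  shows "hmul (vsc c x) z = vsc c (hmul x z)"
proof -
  have f: "finite (hsupp x)" "finite (hsupp z)" using assms HcarrierD(1) by auto
  show ?thesis
    apply (rule ext)
    apply (simp only: vsc_apply)
    apply (subst (1 2) hmul_eq[OF f(1) _ f(2) order_refl])
    using hsupp_vsc apply auto[2]
    by (simp add: sum_distrib_left mult.assoc)
qed

lemma nd_sym: "nd i i' = nd i' i" by (simp add: nd_def)

lemma dvd_nat_abs3: "3 dvd nat \<bar>x::int\<bar> \<Longrightarrow> x mod 3 = 0"
proof -
  assume "3 dvd nat \<bar>x\<bar>"
  then have "int 3 dvd int (nat \<bar>x\<bar>)" by (simp only: of_nat_dvd_iff)
  then have "3 dvd \<bar>x\<bar>" by simp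
  then show ?thesis by simp
qed

lemma zV_nd_sym: "zV i (nd i i') = zV i' (nd i i')"
proof (cases "3 dvd nd i i' \<and> nd i i' > 0")
  case True
  then have "3 dvd nat \<bar>i - i'\<bar>" by (simp add: nd_def)
  then have "(i - i') mod 3 = 0" by (rule dvd_nat_abs3)
  then have "i mod 3 = i' mod 3" by (simp add: mod_eq_dvd_iff mod_eq_0_iff_dvd)
  then have m: "(i+1) mod 3 = (i'+1) mod 3" "(i-1) mod 3 = (i'-1) mod 3"
    by presburger+
  show ?thesis unfolding zV_def by (simp only: pV_cong[OF m(1)] pV_cong[OF m(2)])
next
  case False then show ?thesis unfolding zV_def pV_def by (simp only: if_False)
qed

lemma bmul_AA_sym: "bmul (A i) (A i') = bmul (A i') (A i)"
proof -
  have "zV i (nd i i') = zV i' (nd i' i)" using zV_nd_sym[of i i'] nd_sym[of i i'] by simp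
  then show ?thesis by (simp add: add.commute nd_sym[of i i'])
qed

lemma bmul_comm: "bmul b b' = bmul b' b"
  apply (cases b; cases b')
  using bmul_AA_sym by (simp_all add: nd_sym add.commute)

lemma hmul_comm:
  assumes "x \<in> Hcarrier" "y \<in> Hcarrier"
  shows "hmul x y = hmul y x"
proof -
  have f: "finite (hsupp x)" "finite (hsupp y)" using assms HcarrierD(1) by auto
  show ?thesis
    apply (rule ext)
    apply (subst hmul_eq[OF f(1) order_refl f(2) order_refl])
    apply (subst hmul_eq[OF f(2) order_refl f(1) order_refl])
    apply (subst sum.swap)
    apply (intro sum.cong refl)
    apply (subst bmul_comm)
    by (simp only: mult_ac)
qed

lemma hmul_add_right:
  "x \<in> Hcarrier \<Longrightarrow> y \<in> Hcarrier \<Longrightarrow> z \<in> Hcarrier \<Longrightarrow> hmul z (x + y) = hmul z x + hmul z y"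
  by (metis Hc_add hmul_add_left hmul_comm)
lemma hmul_vsc_right:
  "x \<in> Hcarrier \<Longrightarrow> z \<in> Hcarrier \<Longrightarrow> hmul z (vsc c x) = vsc c (hmul z x)"
  by (metis Hc_vsc hmul_vsc_left hmul_comm)

lemma hsupp_zero[simp]: "hsupp 0 = {}" by (simp add: hsupp_def)
lemma hmul_zero_left[simp]: "hmul 0 y = 0" by (simp add: hmul_def fun_eq_iff)
lemma hmul_zero_right[simp]: "hmul y 0 = 0" by (simp add: hmul_def fun_eq_iff)

lemma vsc_minus: "x - y = x + vsc (-1) y" by (simp add: fun_eq_iff)
lemma vsc_uminus: "- y = vsc (-1) y" by (simp add: fun_eq_iff)

lemma hmul_diff_left:
  "x \<in> Hcarrier \<Longrightarrow> y \<in> Hcarrier \<Longrightarrow> z \<in> Hcarrier \<Longrightarrow> hmul (x - y) z = hmul x z - hmul y z"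
  by (simp add: vsc_minus hmul_add_left hmul_vsc_left Hc_vsc)
lemma hmul_diff_right:
  "x \<in> Hcarrier \<Longrightarrow> y \<in> Hcarrier \<Longrightarrow> z \<in> Hcarrier \<Longrightarrow> hmul z (x - y) = hmul z x - hmul z y"
  by (metis Hc_diff hmul_diff_left hmul_comm)
lemma hmul_uminus_left:
  "x \<in> Hcarrier \<Longrightarrow> z \<in> Hcarrier \<Longrightarrow> hmul (- x) z = - hmul x z"
  by (simp add: vsc_uminus hmul_vsc_left)
lemma hmul_uminus_right:
  "x \<in> Hcarrier \<Longrightarrow> z \<in> Hcarrier \<Longrightarrow> hmul z (- x) = - hmul z x"
  by (simp add: vsc_uminus hmul_vsc_right)

lemma hsupp_evec: "hsupp (evec b :: hidx \<Rightarrow> 'a::field) = {b}" by (auto simp: hsupp_def)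

lemma hmul_evec: "hmul (evec b) (evec b') = (bmul b b' :: hidx \<Rightarrow> 'a::field)"
  by (simp add: hmul_fun[of "{b}" _ "{b'}"] hsupp_evec vsc_def)

lemma hmul_sum_left:
  assumes "finite I" "\<And>i. i \<in> I \<Longrightarrow> f i \<in> Hcarrier" "y \<in> Hcarrier"
  shows "hmul (sum f I) y = (\<Sum>i\<in>I. hmul (f i) y)"
  using assms
proof (induct I rule: finite_induct)
  case (insert x F)
  have "sum f F \<in> Hcarrier" by (rule Hc_sum) (use insert in auto)
  then have "hmul (f x + sum f F) y = hmul (f x) y + hmul (sum f F) y"
    using insert by (intro hmul_add_left) auto
  moreover have "hmul (sum f F) y = (\<Sum>i\<in>F. hmul (f i) y)" using insert by auto
  ultimately show ?case unfolding sum.insert[OF insert(1,2)] by (simp only:)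
qed simp
lemma hmul_sum_right:
  assumes "finite I" "\<And>i. i \<in> I \<Longrightarrow> f i \<in> Hcarrier" "y \<in> Hcarrier"
  shows "hmul y (sum f I) = (\<Sum>i\<in>I. hmul y (f i))"
proof -
  have "sum f I \<in> Hcarrier" using assms(2) by (rule Hc_sum)
  then have "hmul y (sum f I) = hmul (sum f I) y" using assms(3) by (rule hmul_comm[symmetric])
  also have "\<dots> = (\<Sum>i\<in>I. hmul (f i) y)" by (rule hmul_sum_left[OF assms])
  also have "\<dots> = (\<Sum>i\<in>I. hmul y (f i))" using assms(2,3) by (intro sum.cong refl hmul_comm)
  finally show ?thesis .
qed

lemma decomp:
  assumes "v \<in> Hcarrier" "finite F" "hsupp v \<subseteq> F"
  shows "v = (\<Sum>b\<in>F. vsc (v b) (evec b))"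
proof (rule ext)
  fix c
  have "(\<Sum>b\<in>F. vsc (v b) (evec b)) c = (\<Sum>b\<in>F. if c = b then v b else 0)"
    by (auto simp: sum_fun_apply intro!: sum.cong)
  also have "\<dots> = v c" using assms by (auto simp: hsupp_def)
  finally show "v c = (\<Sum>b\<in>F. vsc (v b) (evec b)) c" by simp
qed

definition lin :: "((hidx \<Rightarrow> 'a::field) \<Rightarrow> (hidx \<Rightarrow> 'a)) \<Rightarrow> bool" where
  "lin \<phi> \<longleftrightarrow> (\<forall>x\<in>Hcarrier. \<forall>y\<in>Hcarrier. \<phi> (x + y) = \<phi> x + \<phi> y)
     \<and> (\<forall>c. \<forall>x\<in>Hcarrier. \<phi> (vsc c x) = vsc c (\<phi> x))"

lemma lin_add: "lin \<phi> \<Longrightarrow> x \<in> Hcarrier \<Longrightarrow> y \<in> Hcarrier \<Longrightarrow> \<phi> (x + y) = \<phi> x + \<phi> y"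
  by (simp add: lin_def)
lemma lin_vsc: "lin \<phi> \<Longrightarrow> x \<in> Hcarrier \<Longrightarrow> \<phi> (vsc c x) = vsc c (\<phi> x)"
  by (simp add: lin_def)
lemma lin_zero: "lin \<phi> \<Longrightarrow> \<phi> 0 = 0"
proof -
  assume l: "lin \<phi>"
  have e: "vsc 0 x = 0" for x :: "hidx \<Rightarrow> 'a" by (simp add: fun_eq_iff)
  have "\<phi> 0 = \<phi> (vsc 0 0)" by (simp add: e)
  also have "\<dots> = vsc 0 (\<phi> 0)" using lin_vsc[OF l Hc_zero] by blast
  finally show ?thesis by (simp add: e)
qed
lemma lin_diff: "lin \<phi> \<Longrightarrow> x \<in> Hcarrier \<Longrightarrow> y \<in> Hcarrier \<Longrightarrow> \<phi> (x - y) = \<phi> x - \<phi> y"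
  by (simp add: vsc_minus lin_add lin_vsc Hc_vsc) (simp add: fun_eq_iff)
lemma lin_uminus: "lin \<phi> \<Longrightarrow> x \<in> Hcarrier \<Longrightarrow> \<phi> (- x) = - \<phi> x"
  by (simp add: vsc_uminus lin_vsc) (simp add: fun_eq_iff)
lemma lin_sum:
  assumes "lin \<phi>" "finite I" "\<And>i. i \<in> I \<Longrightarrow> f i \<in> Hcarrier"
  shows "\<phi> (sum f I) = (\<Sum>i\<in>I. \<phi> (f i))"
  using assms(2,3)
proof (induct I rule: finite_induct)
  case (insert x F)
  have "sum f F \<in> Hcarrier" by (rule Hc_sum) (use insert in auto)
  then have "\<phi> (f x + sum f F) = \<phi> (f x) + \<phi> (sum f F)"
    using insert by (intro lin_add[OF assms(1)]) auto
  moreover have "\<phi> (sum f F) = (\<Sum>i\<in>F. \<phi> (f i))" using insert by auto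
  ultimately show ?case unfolding sum.insert[OF insert(1,2)] by (simp only:)
qed (simp add: lin_zero[OF assms(1)])

lemma hmul_bisum:
  assumes "finite F" "finite G" "\<And>b. b \<in> F \<Longrightarrow> u b \<in> Hcarrier" "\<And>b. b \<in> G \<Longrightarrow> w b \<in> Hcarrier"
  shows "hmul (\<Sum>b\<in>F. vsc (x b) (u b)) (\<Sum>b'\<in>G. vsc (y b') (w b')) =
    (\<Sum>b\<in>F. \<Sum>b'\<in>G. vsc (x b * y b') (hmul (u b) (w b')))"
proof -
  have "hmul (\<Sum>b\<in>F. vsc (x b) (u b)) (\<Sum>b'\<in>G. vsc (y b') (w b')) =
     (\<Sum>b\<in>F. hmul (vsc (x b) (u b)) (\<Sum>b'\<in>G. vsc (y b') (w b')))"
    using assms by (intro hmul_sum_left) (auto intro!: Hc_sum Hc_vsc)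
  also have "\<dots> = (\<Sum>b\<in>F. \<Sum>b'\<in>G. hmul (vsc (x b) (u b)) (vsc (y b') (w b')))"
    using assms by (intro sum.cong refl hmul_sum_right) (auto intro!: Hc_sum Hc_vsc)
  also have "\<dots> = (\<Sum>b\<in>F. \<Sum>b'\<in>G. vsc (x b * y b') (hmul (u b) (w b')))"
    using assms by (intro sum.cong refl) (simp add: hmul_vsc_left hmul_vsc_right Hc_vsc Hc_hmul, simp add: fun_eq_iff mult.assoc)
  finally show ?thesis .
qed

lemma lin_eqI:
  assumes "lin \<phi>" "lin \<psi>" "\<And>b. valid_idx b \<Longrightarrow> \<phi> (evec b) = \<psi> (evec b)" "v \<in> Hcarrier"
  shows "\<phi> v = \<psi> v"
proof -
  have f: "finite (hsupp v)" and vb: "\<And>b. b \<in> hsupp v \<Longrightarrow> valid_idx b"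
    using assms(4) HcarrierD by (auto simp: hsupp_def)
  have "\<phi> v = \<phi> (\<Sum>b\<in>hsupp v. vsc (v b) (evec b))" using decomp[OF assms(4) f order_refl] by simp
  also have "\<dots> = (\<Sum>b\<in>hsupp v. vsc (v b) (\<phi> (evec b)))"
    using vb by (simp add: lin_sum[OF assms(1) f] Hc_vsc Hc_evec lin_vsc[OF assms(1)])
  also have "\<dots> = (\<Sum>b\<in>hsupp v. vsc (v b) (\<psi> (evec b)))" using vb assms(3) by simp
  also have "\<dots> = \<psi> (\<Sum>b\<in>hsupp v. vsc (v b) (evec b))"
    using vb by (simp add: lin_sum[OF assms(2) f] Hc_vsc Hc_evec lin_vsc[OF assms(2)])
  finally show ?thesis using decomp[OF assms(4) f order_refl] by simp
qed

lemma lin_mulI: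
  assumes "lin \<phi>" "\<And>x. x \<in> Hcarrier \<Longrightarrow> \<phi> x \<in> Hcarrier"
    "\<And>b b'. valid_idx b \<Longrightarrow> valid_idx b' \<Longrightarrow> \<phi> (bmul b b') = hmul (\<phi> (evec b)) (\<phi> (evec b'))"
    "x \<in> Hcarrier" "y \<in> Hcarrier"
  shows "\<phi> (hmul x y) = hmul (\<phi> x) (\<phi> y)"
proof -
  have f: "finite (hsupp x)" "finite (hsupp y)"
    and vb: "\<And>b. b \<in> hsupp x \<Longrightarrow> valid_idx b" "\<And>b. b \<in> hsupp y \<Longrightarrow> valid_idx b"
    using assms(4,5) HcarrierD by (auto simp: hsupp_def)
  have "\<phi> (hmul x y) = \<phi> (\<Sum>b\<in>hsupp x. \<Sum>b'\<in>hsupp y. vsc (x b * y b') (bmul b b'))"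
    by (simp add: hmul_fun[OF f(1) order_refl f(2) order_refl])
  also have "\<dots> = (\<Sum>b\<in>hsupp x. \<Sum>b'\<in>hsupp y. vsc (x b * y b') (\<phi> (bmul b b')))"
    by (simp add: lin_sum[OF assms(1)] f Hc_sum Hc_vsc Hc_bmul lin_vsc[OF assms(1)])
  also have "\<dots> = (\<Sum>b\<in>hsupp x. \<Sum>b'\<in>hsupp y. vsc (x b * y b') (hmul (\<phi> (evec b)) (\<phi> (evec b'))))"
    using vb assms(3) by simp
  also have "\<dots> = hmul (\<Sum>b\<in>hsupp x. vsc (x b) (\<phi> (evec b))) (\<Sum>b'\<in>hsupp y. vsc (y b') (\<phi> (evec b')))"
    using vb assms(2) by (intro hmul_bisum[symmetric] f) (auto intro!: Hc_evec)
  also have "\<dots> = hmul (\<phi> x) (\<phi> y)"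
  proof -
    have "\<phi> x = (\<Sum>b\<in>hsupp x. vsc (x b) (\<phi> (evec b)))"
      apply (subst decomp[OF assms(4) f(1) order_refl])
      using vb by (simp add: lin_sum[OF assms(1) f(1)] Hc_vsc Hc_evec lin_vsc[OF assms(1)])
    moreover have "\<phi> y = (\<Sum>b\<in>hsupp y. vsc (y b) (\<phi> (evec b)))"
      apply (subst decomp[OF assms(5) f(2) order_refl])
      using vb by (simp add: lin_sum[OF assms(1) f(2)] Hc_vsc Hc_evec lin_vsc[OF assms(1)])
    ultimately show ?thesis by simp
  qed
  finally show ?thesis .
qed

lemma m3cases: "(x::int) mod 3 = 0 \<or> x mod 3 = 1 \<or> x mod 3 = 2" by presburger

lemma pcoef_perm: "pcoef r 1 * pcoef (-(i+1)) t + pcoef r 2 * pcoef (-(i+2)) t = (pcoef (-(i+r)) t :: 'a::field)"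
proof -
  have e: "pcoef (-(i+1)) t = (pcoef (-(i mod 3+1)) t :: 'a)" "pcoef (-(i+2)) t = (pcoef (-(i mod 3+2)) t :: 'a)"
     "pcoef (-(i+r)) t = (pcoef (-(i mod 3+r mod 3)) t :: 'a)" "pcoef r 1 = (pcoef (r mod 3) 1 :: 'a)" "pcoef r 2 = (pcoef (r mod 3) 2 :: 'a)"
    by (rule pcoef_cong, presburger)+
  show ?thesis unfolding e using m3cases[of i] m3cases[of r]
    by (elim disjE; simp add: pcoef_def)
qed

lemma pcoef_lin: "(pcoef r t :: 'a::field) = pcoef r 1 * pcoef 1 t + pcoef r 2 * pcoef 2 t"
  by (simp add: pcoef_def)

lemma zcoef_bil: "(pcoef (-(r+t)+1) w - pcoef (-(r+t)-1) w :: 'a::field) =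
   pcoef r 1 * pcoef t 1 * (pcoef (-2+1) w - pcoef (-2-1) w)
 + pcoef r 1 * pcoef t 2 * (pcoef (-3+1) w - pcoef (-3-1) w)
 + pcoef r 2 * pcoef t 1 * (pcoef (-3+1) w - pcoef (-3-1) w)
 + pcoef r 2 * pcoef t 2 * (pcoef (-4+1) w - pcoef (-4-1) w)"
proof -
  have e: "pcoef (-(r+t)+1) w = (pcoef (-(r mod 3+t mod 3)+1) w :: 'a)" "pcoef (-(r+t)-1) w = (pcoef (-(r mod 3+t mod 3)-1) w :: 'a)"
     "pcoef r 1 = (pcoef (r mod 3) 1 :: 'a)" "pcoef r 2 = (pcoef (r mod 3) 2 :: 'a)"
     "pcoef t 1 = (pcoef (t mod 3) 1 :: 'a)" "pcoef t 2 = (pcoef (t mod 3) 2 :: 'a)"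
    by (rule pcoef_cong, presburger)+
  show ?thesis unfolding e using m3cases[of r] m3cases[of t]
    by (elim disjE; simp add: pcoef_def)
qed

lemma pcoef_perm': "(pcoef (- i - r) t :: 'a::field) = pcoef r 1 * pcoef (- i - 1) t + pcoef r 2 * pcoef (- i - 2) t"
proof -
  have "pcoef r 1 * pcoef (-(i+1)) t + pcoef r 2 * pcoef (-(i+2)) t = (pcoef (-(i+r)) t :: 'a)" by (rule pcoef_perm)
  then show ?thesis by simp
qed

lemma zcoef_bil': "(pcoef (- r - t + 1) w - pcoef (- r - t - 1) w :: 'a::field) = pcoef r 1 * pcoef t 1 * (pcoef (- 1) w - pcoef (- 3) w) + pcoef r 1 * pcoef t 2 * (pcoef (- 2) w - pcoef (- 4) w) + pcoef r 2 * pcoef t 1 * (pcoef (- 2) w - pcoef (- 4) w) + pcoef r 2 * pcoef t 2 * (pcoef (- 3) w - pcoef (- 5) w)"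
proof -
  have "(pcoef (-(r+t)+1) w - pcoef (-(r+t)-1) w :: 'a::field) =
   pcoef r 1 * pcoef t 1 * (pcoef (-2+1) w - pcoef (-2-1) w)
 + pcoef r 1 * pcoef t 2 * (pcoef (-3+1) w - pcoef (-3-1) w)
 + pcoef r 2 * pcoef t 1 * (pcoef (-3+1) w - pcoef (-3-1) w)
 + pcoef r 2 * pcoef t 2 * (pcoef (-4+1) w - pcoef (-4-1) w)" by (rule zcoef_bil)
  then show ?thesis by simp
qed

lemma pV_lin: "(pV r m :: hidx \<Rightarrow> 'a::field) = vsc (pcoef r 1) (pV 1 m) + vsc (pcoef r 2) (pV 2 m)"
proof (rule ext)
  fix c show "(pV r m :: hidx \<Rightarrow> 'a::field) c = (vsc (pcoef r 1) (pV 1 m) + vsc (pcoef r 2) (pV 2 m)) c"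
    by (cases c) (simp_all, simp add: pcoef_def)
qed

lemma pV_perm: "(pV (-(i+r)) m :: hidx \<Rightarrow> 'a::field) = vsc (pcoef r 1) (pV (-(i+1)) m) + vsc (pcoef r 2) (pV (-(i+2)) m)"
proof (rule ext)
  fix c show "(pV (-(i+r)) m :: hidx \<Rightarrow> 'a::field) c = (vsc (pcoef r 1) (pV (-(i+1)) m) + vsc (pcoef r 2) (pV (-(i+2)) m)) c"
    by (cases c) (auto simp: pcoef_perm'[of i r])
qed

lemma zV_bil: "(zV (-(r+t)) m :: hidx \<Rightarrow> 'a::field) =
   vsc (pcoef r 1 * pcoef t 1) (zV (-2) m) + vsc (pcoef r 1 * pcoef t 2) (zV (-3) m)
 + vsc (pcoef r 2 * pcoef t 1) (zV (-3) m) + vsc (pcoef r 2 * pcoef t 2) (zV (-4) m)"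
proof (rule ext)
  fix c show "(zV (-(r+t)) m :: hidx \<Rightarrow> 'a::field) c = (vsc (pcoef r 1 * pcoef t 1) (zV (-2) m) + vsc (pcoef r 1 * pcoef t 2) (zV (-3) m)
 + vsc (pcoef r 2 * pcoef t 1) (zV (-3) m) + vsc (pcoef r 2 * pcoef t 2) (zV (-4) m)) c"
    by (cases c) (auto simp: zcoef_bil'[of r t])
qed

lemma pV_valid: "3 dvd k \<Longrightarrow> 0 < k \<Longrightarrow>
   (pV r k :: hidx \<Rightarrow> 'a::field) = vsc (pcoef r 1) (evec (P 1 k)) + vsc (pcoef r 2) (evec (P 2 k))"
  by (rule ext, case_tac x) (auto simp: pcoef_def)

lemma pV_invalid: "\<not> (3 dvd k \<and> 0 < k) \<Longrightarrow> pV r k = 0"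
  by (auto simp: pV_def)

lemma evP_Hc: "3 dvd k \<Longrightarrow> 0 < k \<Longrightarrow> r \<in> {1,2} \<Longrightarrow> (evec (P r k) :: hidx \<Rightarrow> 'a::field) \<in> Hcarrier"
  by (rule Hc_evec) simp

lemma hmul_lin2_right:
  assumes "x \<in> Hcarrier" "u \<in> Hcarrier" "w \<in> Hcarrier"
  shows "hmul x (vsc a u + vsc b w) = vsc a (hmul x u) + vsc b (hmul x w)"
  using assms by (simp add: hmul_add_right hmul_vsc_right Hc_vsc)

lemma M3: "hmul (aV i) (pV r k) = (vsc (3/2) (pV r k) - pV (-(i+r)) k :: hidx \<Rightarrow> 'a::field)"
proof (cases "3 dvd k \<and> 0 < k")
  case True
  have "hmul (aV i) (pV r k) = (vsc (pcoef r 1) (bmul (A i) (P 1 k)) + vsc (pcoef r 2) (bmul (A i) (P 2 k)) :: hidx \<Rightarrow> 'a::field)"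
    using True unfolding pV_valid[of k r, OF conjunct1[OF True] conjunct2[OF True]]
    by (simp add: hmul_lin2_right evP_Hc Hc_aV) (simp add: aV_def hmul_evec)
  also have "\<dots> = vsc (3/2) (pV r k) - pV (-(i+r)) k"
    unfolding pV_lin[of r k] pV_perm[of i r k]
    by (rule ext) (simp add: algebra_simps)
  finally show ?thesis .
next
  case False then show ?thesis by (simp add: pV_invalid fun_eq_iff)
qed

lemma M5: "3 dvd k \<Longrightarrow> 0 < k \<Longrightarrow> 0 < j \<Longrightarrow>
  hmul (sV j) (pV r k) = (vsc (3/4) (pV r j + pV r k) - vsc (3/8) (pV r (nd (int j) (int k)) + pV r (j + k)) :: hidx \<Rightarrow> 'a::field)"
proof -
  assume k: "3 dvd k" "0 < k" and j: "0 < j"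
  then have False: "j \<noteq> 0" by simp
  have "hmul (sV j) (pV r k) = (vsc (pcoef r 1) (bmul (S j) (P 1 k)) + vsc (pcoef r 2) (bmul (S j) (P 2 k)) :: hidx \<Rightarrow> 'a::field)"
    unfolding pV_valid[of k r, OF k]
    using False by (simp add: hmul_lin2_right evP_Hc k Hc_sV) (simp add: sV_def hmul_evec)
  also have "\<dots> = vsc (3/4) (pV r j + pV r k) - vsc (3/8) (pV r (nd (int j) (int k)) + pV r (j + k))"
    unfolding pV_lin[of r j] pV_lin[of r k] pV_lin[of r "nd (int j) (int k)"] pV_lin[of r "j+k"]
    by (rule ext) (simp add: algebra_simps)
  finally show ?thesis .
qed

lemma M6: "3 dvd h \<Longrightarrow> 0 < h \<Longrightarrow> 3 dvd k \<Longrightarrow> 0 < k \<Longrightarrow>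
  hmul (pV r h) (pV t k) = (vsc (1/4) (zV (- (r + t)) h + zV (- (r + t)) k)
     - vsc (1/8) (zV (- (r + t)) (nd (int h) (int k)) + zV (- (r + t)) (h + k)) :: hidx \<Rightarrow> 'a::field)"
proof -
  assume hk: "3 dvd h" "0 < h" "3 dvd k" "0 < k"
  have "hmul (pV r h) (pV t k) = (vsc (pcoef r 1 * pcoef t 1) (bmul (P 1 h) (P 1 k))
     + vsc (pcoef r 1 * pcoef t 2) (bmul (P 1 h) (P 2 k))
     + vsc (pcoef r 2 * pcoef t 1) (bmul (P 2 h) (P 1 k))
     + vsc (pcoef r 2 * pcoef t 2) (bmul (P 2 h) (P 2 k)) :: hidx \<Rightarrow> 'a::field)"
    unfolding pV_valid[of h r, OF hk(1,2)] pV_valid[of k t, OF hk(3,4)]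
    using hk
    apply (simp add: hmul_lin2_right evP_Hc hmul_add_left hmul_vsc_left Hc_vsc Hc_add Hc_hmul hmul_evec)
    by (rule ext) (simp add: algebra_simps)
  also have "\<dots> = vsc (1/4) (zV (- (r + t)) h + zV (- (r + t)) k)
     - vsc (1/8) (zV (- (r + t)) (nd (int h) (int k)) + zV (- (r + t)) (h + k))"
    unfolding zV_bil[of r t h] zV_bil[of r t k] zV_bil[of r t "nd (int h) (int k)"] zV_bil[of r t "h+k"]
    by (rule ext) (simp add: algebra_simps)
  finally show ?thesis .
qed

lemma pcoef_aff: "e = 1 \<or> e = -1 \<Longrightarrow>
  (pcoef (c + e*r) t :: 'a::field) = pcoef r 1 * pcoef (c+e) t + pcoef r 2 * pcoef (c + 2*e) t"
proof -
  assume "e = 1 \<or> e = -1"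
  then show ?thesis
  proof
    assume e: "e = 1"
    have ee: "pcoef (c + e*r) t = (pcoef (c mod 3 + r mod 3) t :: 'a)" "pcoef (c+e) t = (pcoef (c mod 3+1) t :: 'a)"
      "pcoef (c + 2*e) t = (pcoef (c mod 3 + 2) t :: 'a)"
      "pcoef r 1 = (pcoef (r mod 3) 1 :: 'a)" "pcoef r 2 = (pcoef (r mod 3) 2 :: 'a)"
      using e by (rule_tac pcoef_cong, presburger)+
    show ?thesis unfolding ee using m3cases[of c] m3cases[of r]
      by (elim disjE; simp add: pcoef_def)
  next
    assume e: "e = -1"
    have ee: "pcoef (c + e*r) t = (pcoef (c mod 3 - r mod 3) t :: 'a)" "pcoef (c+e) t = (pcoef (c mod 3 - 1) t :: 'a)"
      "pcoef (c + 2*e) t = (pcoef (c mod 3 - 2) t :: 'a)"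
      "pcoef r 1 = (pcoef (r mod 3) 1 :: 'a)" "pcoef r 2 = (pcoef (r mod 3) 2 :: 'a)"
      using e by (rule_tac pcoef_cong, presburger)+
    show ?thesis unfolding ee using m3cases[of c] m3cases[of r]
      by (elim disjE; simp add: pcoef_def)
  qed
qed

lemma pV_aff: "e = 1 \<or> e = -1 \<Longrightarrow>
  (pV (c + e*r) k :: hidx \<Rightarrow> 'a::field) = vsc (pcoef r 1) (pV (c+e) k) + vsc (pcoef r 2) (pV (c + 2*e) k)"
proof (rule ext)
  fix x assume e: "e = 1 \<or> e = -1"
  note pa = pcoef_aff[OF e, of c r, where 'a='a]
  show "(pV (c + e*r) k :: hidx \<Rightarrow> 'a::field) x = (vsc (pcoef r 1) (pV (c+e) k) + vsc (pcoef r 2) (pV (c + 2*e) k)) x"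
    apply (cases x)
    apply (simp_all only: pV_A pV_S pV_P pa vsc_apply plus_fun_apply)
    by simp_all
qed

lemma zV_cong: "x mod 3 = y mod 3 \<Longrightarrow> zV x m = zV y m"
proof -
  assume h: "x mod 3 = y mod 3"
  have "(x+1) mod 3 = (y+1) mod 3" "(x-1) mod 3 = (y-1) mod 3" using h by presburger+
  then show ?thesis unfolding zV_def by (simp only: pV_cong[of "x+1" "y+1"] pV_cong[of "x-1" "y-1"])
qed

fun img :: "int \<Rightarrow> int \<Rightarrow> hidx \<Rightarrow> hidx \<Rightarrow> 'a::field" where
  "img c e (A i) = aV (c + e * i)"
| "img c e (S j) = sV j"
| "img c e (P r k) = vsc (of_int e) (pV (c + e * r) k)"

lemma Hc_img[intro]: "img c e b \<in> Hcarrier"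
  by (cases b) (auto intro!: Hc_vsc)

definition Lraw :: "int \<Rightarrow> int \<Rightarrow> (hidx \<Rightarrow> 'a::field) \<Rightarrow> hidx \<Rightarrow> 'a" where
  "Lraw c e v = (\<Sum>b\<in>hsupp v. vsc (v b) (img c e b))"

definition Lm :: "int \<Rightarrow> int \<Rightarrow> (hidx \<Rightarrow> 'a::field) \<Rightarrow> hidx \<Rightarrow> 'a" where
  "Lm c e = restrict (Lraw c e) Hcarrier"

lemma Lm_eq:
  assumes "v \<in> Hcarrier" "finite F" "hsupp v \<subseteq> F"
  shows "Lm c e v = (\<Sum>b\<in>F. vsc (v b) (img c e b))"
proof -
  have "Lm c e v = (\<Sum>b\<in>hsupp v. vsc (v b) (img c e b))" using assms(1) by (simp add: Lm_def Lraw_def)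
  also have "\<dots> = (\<Sum>b\<in>F. vsc (v b) (img c e b))"
    apply (rule sum.mono_neutral_left[OF assms(2,3)])
    by (auto simp: hsupp_def vsc_def fun_eq_iff)
  finally show ?thesis .
qed

lemma Hc_Lm[intro]: "v \<in> Hcarrier \<Longrightarrow> Lm c e v \<in> Hcarrier"
  by (simp add: Lm_eq[OF _ HcarrierD(1) order_refl] Hc_sum Hc_vsc Hc_img)

lemma lin_Lm: "lin (Lm c e)"
  unfolding lin_def
proof (intro conjI ballI allI)
  fix x y :: "hidx \<Rightarrow> 'a" assume xy: "x \<in> Hcarrier" "y \<in> Hcarrier"
  have f: "finite (hsupp x \<union> hsupp y)" using xy HcarrierD(1) by auto
  have s: "hsupp (x + y) \<subseteq> hsupp x \<union> hsupp y" by (rule hsupp_add)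
  show "Lm c e (x + y) = Lm c e x + Lm c e y"
    apply (subst (1 2 3) Lm_eq[OF _ f])
    using xy s apply auto[6]
    by (simp add: sum.distrib[symmetric] vsc_def fun_eq_iff sum_fun_apply distrib_right)
next
  fix a and x :: "hidx \<Rightarrow> 'a" assume x: "x \<in> Hcarrier"
  have f: "finite (hsupp x)" using x HcarrierD(1) by auto
  show "Lm c e (vsc a x) = vsc a (Lm c e x)"
    apply (subst (1 2) Lm_eq[OF _ f])
    using x hsupp_vsc apply auto[4]
    by (simp add: vsc_def fun_eq_iff sum_fun_apply sum_distrib_left mult.assoc)
qed

lemma Lm_evec: "valid_idx b \<Longrightarrow> Lm c e (evec b) = img c e b"
  by (simp add: Lm_eq[OF Hc_evec _ order_refl] hsupp_evec vsc_def fun_eq_iff)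

lemma Lm_aV: "Lm c e (aV i) = aV (c + e * i)"
  unfolding aV_def[of i] by (simp add: Lm_evec aV_def)

lemma Lm_sV: "Lm c e (sV j) = sV j"
  by (cases "j = 0") (simp_all add: lin_zero[OF lin_Lm] sV_def Lm_evec)

lemma Lm_pV: "e = 1 \<or> e = -1 \<Longrightarrow> Lm c e (pV r k) = vsc (of_int e) (pV (c + e * r) k)"
proof (cases "3 dvd k \<and> 0 < k")
  case True
  assume e: "e = 1 \<or> e = -1"
  have "Lm c e (pV r k) = vsc (pcoef r 1) (Lm c e (evec (P 1 k))) + vsc (pcoef r 2) (Lm c e (evec (P 2 k)))"
    unfolding pV_valid[of k r, OF conjunct1[OF True] conjunct2[OF True]]
    using True by (simp add: lin_add[OF lin_Lm] lin_vsc[OF lin_Lm] Hc_vsc evP_Hc)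
  also have "\<dots> = vsc (of_int e) (pV (c + e * r) k)"
    using True by (simp add: Lm_evec pV_aff[OF e, of c r] fun_eq_iff algebra_simps)
  finally show ?thesis .
next
  case False then show ?thesis by (simp add: pV_invalid lin_zero[OF lin_Lm] fun_eq_iff)
qed

lemma Lm_zV: "e = 1 \<or> e = -1 \<Longrightarrow> Lm c e (zV r k) = zV (c + e * r) k"
proof -
  assume e: "e = 1 \<or> e = -1"
  have "Lm c e (zV r k) = vsc (of_int e) (pV (c + e * (r+1)) k) - vsc (of_int e) (pV (c + e * (r - 1)) k)"
    unfolding zV_def by (simp add: lin_diff[OF lin_Lm Hc_pV Hc_pV] Lm_pV[OF e])
  also have "\<dots> = zV (c + e * r) k"
    using e
  proof
    assume "e = 1" then show ?thesis by (simp add: zV_def algebra_simps fun_eq_iff)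
  next
    assume "e = -1" then show ?thesis by (simp add: zV_def algebra_simps fun_eq_iff)
  qed
  finally show ?thesis .
qed

lemmas HcS = Hc_add Hc_diff Hc_vsc Hc_aV Hc_sV Hc_pV Hc_zV Hc_uminus
lemmas LmS = lin_add[OF lin_Lm] lin_diff[OF lin_Lm] lin_vsc[OF lin_Lm] Lm_aV Lm_sV

lemma nd_aff: "e = 1 \<or> e = -1 \<Longrightarrow> nd (c + e*i) (c + e*i') = nd i i'"
  unfolding nd_def by (auto simp: abs_if algebra_simps)

lemma eprod: "e = 1 \<or> e = -1 \<Longrightarrow> (of_int e * of_int e :: 'a::field) = 1"
  by auto

lemma hmul_aa: "hmul (aV x) (aV y) = bmul (A x) (A y)"
  by (simp only: aV_def hmul_evec)
lemma hmul_as: assumes "0 < j" shows "hmul (aV x) (sV j) = bmul (A x) (S j)"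
proof -
  have s: "sV j = evec (S j)" using assms by (simp add: sV_def)
  show ?thesis unfolding s aV_def by (rule hmul_evec)
qed
lemma hmul_ss: assumes "0 < j" "0 < l" shows "hmul (sV j) (sV l) = bmul (S j) (S l)"
proof -
  have s: "sV j = evec (S j)" "sV l = evec (S l)" using assms by (simp_all add: sV_def)
  show ?thesis unfolding s by (rule hmul_evec)
qed

lemma vsc_vsc: "vsc a (vsc b x) = vsc (a * b) x" by (simp add: fun_eq_iff mult.assoc)
lemma vsc_diff: "vsc a (x - y) = vsc a x - vsc a y" by (simp add: fun_eq_iff algebra_simps)
lemma vsc_add: "vsc a (x + y) = vsc a x + vsc a y" by (simp add: fun_eq_iff algebra_simps)
lemma vsc_one: "vsc 1 x = x" by (simp add: fun_eq_iff)

lemma Lm_AA: "e = 1 \<or> e = -1 \<Longrightarrow> Lm c e (bmul (A i) (A i')) = hmul (img c e (A i)) (img c e (A i'))"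
  by (simp add: HcS LmS Lm_zV nd_aff hmul_aa)

lemma Lm_AS: "e = 1 \<or> e = -1 \<Longrightarrow> 0 < j \<Longrightarrow> Lm c e (bmul (A i) (S j)) = hmul (img c e (A i)) (img c e (S j))"
  apply (simp add: HcS LmS Lm_zV hmul_as)
  by (auto simp: algebra_simps)

lemma Lm_AP: "e = 1 \<or> e = -1 \<Longrightarrow> Lm c e (bmul (A i) (P r k)) = hmul (img c e (A i)) (img c e (P r k))"
proof -
  assume e: "e = 1 \<or> e = -1"
  have cg: "(pV (c + e * (-(i+r))) k :: hidx \<Rightarrow> 'a) = pV (-(c + e*i + (c + e*r))) k" by (rule pV_cong) (use e in \<open>elim disjE; simp; presburger\<close>)
  show ?thesis
    using cg by (simp add: HcS LmS Lm_pV[OF e] hmul_vsc_right M3 vsc_vsc vsc_diff mult.commute)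
qed

lemma Lm_SS: "0 < j \<Longrightarrow> 0 < l \<Longrightarrow> Lm c e (bmul (S j) (S l)) = hmul (img c e (S j)) (img c e (S l))"
  by (simp add: HcS LmS hmul_ss)

lemma Lm_SP: "e = 1 \<or> e = -1 \<Longrightarrow> 0 < j \<Longrightarrow> 3 dvd k \<Longrightarrow> 0 < k \<Longrightarrow>
   Lm c e (bmul (S j) (P r k)) = hmul (img c e (S j)) (img c e (P r k))"
  by (simp add: HcS LmS Lm_pV hmul_vsc_right M5) (simp add: fun_eq_iff algebra_simps)

lemma Lm_PP: "e = 1 \<or> e = -1 \<Longrightarrow> 3 dvd h \<Longrightarrow> 0 < h \<Longrightarrow> 3 dvd k \<Longrightarrow> 0 < k \<Longrightarrow>
   Lm c e (bmul (P r h) (P t k)) = hmul (img c e (P r h)) (img c e (P t k))"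
proof -
  assume e: "e = 1 \<or> e = -1" and hk: "3 dvd h" "0 < h" "3 dvd k" "0 < k"
  have cg: "(zV (c + e * (-(r+t))) m :: hidx \<Rightarrow> 'a) = zV (-(c + e*r + (c + e*t))) m" for m by (rule zV_cong) (use e in \<open>elim disjE; simp; presburger\<close>)
  have ee: "(of_int e * of_int e :: 'a) = 1" using e by auto
  show ?thesis
    using ee cg by (simp add: HcS LmS Lm_zV[OF e] hmul_vsc_right hmul_vsc_left M6[OF hk] vsc_vsc vsc_one)
qed

lemma Lm_bmul:
  assumes e: "e = 1 \<or> e = -1" and v: "valid_idx b" "valid_idx b'"
  shows "Lm c e (bmul b b') = hmul (img c e b) (img c e b')"
proof (cases b)
  case (A i)
  then show ?thesis
  proof (cases b')
    case (A i') show ?thesis unfolding \<open>b = A i\<close> A by (rule Lm_AA[OF e])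
  next
    case (S j) then have "0 < j" using v by simp
    then show ?thesis unfolding \<open>b = A i\<close> S by (rule Lm_AS[OF e])
  next
    case (P r k) show ?thesis unfolding \<open>b = A i\<close> P by (rule Lm_AP[OF e])
  qed
next
  case (S j)
  then show ?thesis
  proof (cases b')
    case (A i)
    have "Lm c e (bmul b b') = Lm c e (bmul (A i) (S j))" using \<open>b = S j\<close> A by (simp add: bmul_comm[of "S j"])
    also have "\<dots> = hmul (img c e (A i)) (img c e (S j))" using v S by (intro Lm_AS[OF e]) simp
    also have "\<dots> = hmul (img c e b) (img c e b')" unfolding A S by (rule hmul_comm[OF Hc_img Hc_img])
    finally show ?thesis .
  next
    case (S l) then show ?thesis unfolding \<open>b = S j\<close> S using v S \<open>b = S j\<close> by (intro Lm_SS) simp_all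
  next
    case (P r k) then show ?thesis unfolding \<open>b = S j\<close> P using v P \<open>b = S j\<close> by (intro Lm_SP[OF e]) simp_all
  qed
next
  case (P r k)
  then show ?thesis
  proof (cases b')
    case (A i)
    have "Lm c e (bmul b b') = Lm c e (bmul (A i) (P r k))" using \<open>b = P r k\<close> A by (simp add: bmul_comm[of "P r k"])
    also have "\<dots> = hmul (img c e (A i)) (img c e (P r k))" by (rule Lm_AP[OF e])
    also have "\<dots> = hmul (img c e b) (img c e b')" unfolding A P by (rule hmul_comm[OF Hc_img Hc_img])
    finally show ?thesis .
  next
    case (S j)
    have "Lm c e (bmul b b') = Lm c e (bmul (S j) (P r k))" using \<open>b = P r k\<close> S by (simp add: bmul_comm[of "P r k"])
    also have "\<dots> = hmul (img c e (S j)) (img c e (P r k))" using v S P by (intro Lm_SP[OF e]) simp_all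
    also have "\<dots> = hmul (img c e b) (img c e b')" unfolding S P by (rule hmul_comm[OF Hc_img Hc_img])
    finally show ?thesis .
  next
    case (P t h) then show ?thesis unfolding \<open>b = P r k\<close> P using v P \<open>b = P r k\<close> by (intro Lm_PP[OF e]) simp_all
  qed
qed

lemma lin_comp: "lin \<phi> \<Longrightarrow> lin \<psi> \<Longrightarrow> (\<And>x. x \<in> Hcarrier \<Longrightarrow> \<psi> x \<in> Hcarrier) \<Longrightarrow> lin (\<lambda>x. \<phi> (\<psi> x))"
  unfolding lin_def by (auto intro!: Hc_add Hc_vsc)

lemma lin_id: "lin (\<lambda>x. x)" by (simp add: lin_def)

lemma Lm_inv:
  fixes v :: "hidx \<Rightarrow> 'a::field"
  assumes e: "e = 1 \<or> e = -1" and v: "v \<in> Hcarrier"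
  shows "Lm c e (Lm (- e * c) e v) = v"
proof -
  have "Lm c e (Lm (- e * c) e v) = (\<lambda>x. x) v"
  proof (rule lin_eqI[OF lin_comp[OF lin_Lm lin_Lm Hc_Lm] lin_id _ v])
    fix b :: hidx assume vb: "valid_idx b"
    show "Lm c e (Lm (- e * c) e (evec b)) = (evec b :: hidx \<Rightarrow> 'a)"
    proof (cases b)
      case (A i)
      have "c + e * (- e * c + e * i) = i" using e by auto
      then show ?thesis using A vb by (simp add: Lm_evec Lm_aV aV_def)
    next
      case (S j)
      then have "sV j = evec (S j)" using vb by (simp add: sV_def)
      then show ?thesis using S vb by (simp add: Lm_evec Lm_sV)
    next
      case (P r k)
      have ee: "(of_int e * of_int e :: 'a) = 1" using e by auto
      have cc: "c + e * (- e * c + e * r) = r" using e by auto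
      have "Lm c e (Lm (- e * c) e (evec b)) = (vsc :: 'a \<Rightarrow> _) (of_int e * of_int e) (pV (c + e * (- e * c + e * r)) k)"
        using P vb by (simp add: Lm_evec lin_vsc[OF lin_Lm Hc_pV] Lm_pV[OF e] vsc_vsc)
      also have "\<dots> = pV r k" unfolding ee cc by (rule vsc_one)
      also have "\<dots> = evec b" using P vb by (auto simp: pV_def)
      finally show ?thesis .
    qed
  qed
  then show ?thesis by simp
qed

lemma Lm_Hauts:
  assumes e: "e = 1 \<or> e = -1"
  shows "Lm c e \<in> Hauts"
  unfolding Hauts_def
proof (intro CollectI conjI ballI allI)
  show "Lm c e \<in> extensional Hcarrier" unfolding Lm_def by (rule restrict_extensional)
  have cc: "- e * (- e * c) = c" using e by auto
  show "bij_betw (Lm c e) Hcarrier Hcarrier"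
    apply (rule bij_betw_byWitness[where f' = "Lm (- e * c) e"])
    using Lm_inv[OF e] Lm_inv[OF e, of _ "- e * c", unfolded cc] Hc_Lm by auto
  fix x y :: "hidx \<Rightarrow> 'a" assume xy: "x \<in> Hcarrier" "y \<in> Hcarrier"
  show "Lm c e (x + y) = Lm c e x + Lm c e y" by (rule lin_add[OF lin_Lm xy])
  show "Lm c e (hmul x y) = hmul (Lm c e x) (Lm c e y)"
  proof (rule lin_mulI[OF lin_Lm Hc_Lm _ xy])
    fix b b' :: hidx assume vb: "valid_idx b" "valid_idx b'"
    show "Lm c e (bmul b b') = (hmul (Lm c e (evec b)) (Lm c e (evec b')) :: hidx \<Rightarrow> 'a)"
      unfolding Lm_evec[OF vb(1)] Lm_evec[OF vb(2)] by (rule Lm_bmul[OF e vb])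
  qed
next
  fix a and x :: "hidx \<Rightarrow> 'a" assume "x \<in> Hcarrier"
  then show "Lm c e (vsc a x) = vsc a (Lm c e x)" by (rule lin_vsc[OF lin_Lm])
qed

lemma sum2_focus:
  assumes "finite F" "E \<subseteq> F \<times> F" "\<And>b b'. b \<in> F \<Longrightarrow> b' \<in> F \<Longrightarrow> (b,b') \<notin> E \<Longrightarrow> f b b' = 0"
  shows "(\<Sum>b\<in>F. \<Sum>b'\<in>F. f b b') = (\<Sum>p\<in>E. f (fst p) (snd p))"
proof -
  have "(\<Sum>b\<in>F. \<Sum>b'\<in>F. f b b') = (\<Sum>p\<in>F \<times> F. f (fst p) (snd p))"
    by (simp add: sum.cartesian_product split_def)
  also have "\<dots> = (\<Sum>p\<in>E. f (fst p) (snd p))"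
    using assms by (intro sum.mono_neutral_right) auto
  finally show ?thesis .
qed

lemma hmul_focus:
  fixes x :: "hidx \<Rightarrow> 'a::field"
  assumes "x \<in> Hcarrier" "finite F" "hsupp x \<subseteq> F" "E \<subseteq> F \<times> F"
    "\<And>b b'. b \<in> F \<Longrightarrow> b' \<in> F \<Longrightarrow> x b \<noteq> 0 \<Longrightarrow> x b' \<noteq> 0 \<Longrightarrow> (b,b') \<notin> E \<Longrightarrow> bmul b b' c = (0::'a)"
  shows "hmul x x c = (\<Sum>p\<in>E. x (fst p) * x (snd p) * bmul (fst p) (snd p) c)"
  unfolding hmul_eq[OF assms(2,3,2,3)]
proof (rule sum2_focus[OF assms(2,4)])
  fix b b' assume h: "b \<in> F" "b' \<in> F" "(b, b') \<notin> E"
  show "x b * x b' * bmul b b' c = 0"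
  proof (cases "x b = 0 \<or> x b' = 0")
    case True then show ?thesis by auto
  next
    case False then show ?thesis using assms(5)[OF h(1,2)] h(3) by auto
  qed
qed

lemma finite_AS: "x \<in> Hcarrier \<Longrightarrow> finite {i. x (A i) \<noteq> 0}"
proof -
  assume "x \<in> Hcarrier"
  then have "finite (hsupp x)" by (rule HcarrierD)
  then have "finite (A -` hsupp x)" by (rule finite_vimageI) (simp add: inj_on_def)
  then show ?thesis by (simp add: hsupp_def vimage_def)
qed

lemma finite_SS: "x \<in> Hcarrier \<Longrightarrow> finite {j. x (S j) \<noteq> 0}"
proof -
  assume "x \<in> Hcarrier"
  then have "finite (hsupp x)" by (rule HcarrierD)
  then have "finite (S -` hsupp x)" by (rule finite_vimageI) (simp add: inj_on_def)
  then show ?thesis by (simp add: hsupp_def vimage_def)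
qed

lemma finite_PS: "x \<in> Hcarrier \<Longrightarrow> finite {k. x (P 1 k) \<noteq> 0 \<or> x (P 2 k) \<noteq> 0}"
proof -
  assume "x \<in> Hcarrier"
  then have "finite (hsupp x)" by (rule HcarrierD)
  then have "finite (P 1 -` hsupp x)" "finite (P 2 -` hsupp x)" by (rule finite_vimageI, simp add: inj_on_def)+
  then have "finite (P 1 -` hsupp x \<union> P 2 -` hsupp x)" by simp
  then show ?thesis by (rule rev_finite_subset) (auto simp: hsupp_def)
qed

lemma eight_nz: "(2::'a::field) \<noteq> 0 \<Longrightarrow> (8::'a) \<noteq> 0"
proof -
  assume h: "(2::'a) \<noteq> 0"
  have e: "(8::'a) = 2 * 2 * 2" by simp
  show ?thesis unfolding e by (intro no_zero_divisors h)
qed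

lemma caseI:
  fixes x :: "hidx \<Rightarrow> 'a::field"
  assumes x: "x \<in> Hcarrier" and idem: "hmul x x = x" and two: "(2::'a) \<noteq> 0" and three: "(3::'a) \<noteq> 0"
    and AS: "{i. x (A i) \<noteq> 0} \<noteq> {}" and SS: "{j. x (S j) \<noteq> 0} \<noteq> {}"
  shows False
proof -
  define M where "M = Max {i. x (A i) \<noteq> 0}"
  define N where "N = Max {j. x (S j) \<noteq> 0}"
  have xM: "x (A M) \<noteq> 0" unfolding M_def using Max_in[OF finite_AS[OF x] AS] by simp
  have xN: "x (S N) \<noteq> 0" unfolding N_def using Max_in[OF finite_SS[OF x] SS] by simp
  have bM: "x (A i) \<noteq> 0 \<Longrightarrow> i \<le> M" for i unfolding M_def using finite_AS[OF x] by (simp add: Max_ge)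
  have bN: "x (S j) \<noteq> 0 \<Longrightarrow> j \<le> N" for j unfolding N_def using finite_SS[OF x] by (simp add: Max_ge)
  have N1: "1 \<le> N" using HcarrierD(2)[OF x xN] by simp
  have hb: "x b \<noteq> 0 \<Longrightarrow> (case b of A i \<Rightarrow> i \<le> M | S j \<Rightarrow> 1 \<le> j \<and> j \<le> N | P r k \<Rightarrow> True)" for b
    using bM bN HcarrierD(2)[OF x, of b] by (cases b) auto
  have fin: "finite (hsupp x)" using x by (rule HcarrierD)
  have ne1: "i \<le> M \<Longrightarrow> (M + int N = i) = False" for i using N1 by auto
  have ne2: "i \<le> M \<Longrightarrow> Suc 0 \<le> j \<and> j \<le> N \<Longrightarrow> (M + int N = i + int j) = (i = M \<and> j = N)" for i j by auto
  have ne3: "i \<le> M \<Longrightarrow> Suc 0 \<le> j \<and> j \<le> N \<Longrightarrow> (M + int N = i - int j) = False" for i j using N1 by auto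
  have E: "{(A M, S N), (S N, A M)} \<subseteq> hsupp x \<times> hsupp x" using xM xN by (auto simp: hsupp_def)
  have "hmul x x (A (M + int N)) = (\<Sum>p\<in>{(A M, S N), (S N, A M)}. x (fst p) * x (snd p) * bmul (fst p) (snd p) (A (M + int N)))"
  proof (rule hmul_focus[OF x fin order_refl E])
    fix b b' assume "b \<in> hsupp x" "b' \<in> hsupp x" "x b \<noteq> 0" "x b' \<noteq> 0" "(b, b') \<notin> {(A M, S N), (S N, A M)}"
    then show "bmul b b' (A (M + int N)) = (0::'a)"
      using hb[of b] hb[of b']
      apply (cases b; cases b')
      apply (simp_all add: ne1 ne2 ne3)
      by blast+
  qed
  also have "\<dots> = x (A M) * x (S N) * (3/8) + x (S N) * x (A M) * (3/8)"
  proof -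
    have v1: "bmul (A M) (S N) (A (M + int N)) = (3/8::'a)" using N1 by simp
    have v2: "bmul (S N) (A M) (A (M + int N)) = (3/8::'a)" using N1 by simp
    show ?thesis by (simp del: bmul.simps add: v1 v2)
  qed
  also have "\<dots> = 2 * (x (A M) * x (S N) * (3/8))"
    by (simp only: mult_2 mult.commute mult.left_commute)
  finally have c1: "x (A (M + int N)) = 2 * (x (A M) * x (S N) * (3/8))" using idem by simp
  have c2: "x (A (M + int N)) = 0"
  proof (rule ccontr)
    assume "x (A (M + int N)) \<noteq> 0"
    then have "M + int N \<le> M" by (rule bM)
    then show False using N1 by simp
  qed
  have "(3/8 :: 'a) \<noteq> 0" using two three eight_nz[OF two] by simp
  then have c3: "2 * (x (A M) * x (S N) * (3/8)) \<noteq> 0" using xM xN two by (intro no_zero_divisors)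
  show False using c3 unfolding c1[symmetric] c2 by simp
qed

lemma nz38: "(2::'a::field) \<noteq> 0 \<Longrightarrow> (3::'a) \<noteq> 0 \<Longrightarrow> (3/8::'a) \<noteq> 0"
  using eight_nz by simp

lemma caseII:
  fixes x :: "hidx \<Rightarrow> 'a::field"
  assumes x: "x \<in> Hcarrier" and idem: "hmul x x = x" and two: "(2::'a) \<noteq> 0" and three: "(3::'a) \<noteq> 0"
    and AS: "\<And>i. x (A i) = 0" and SS: "{j. x (S j) \<noteq> 0} \<noteq> {}"
  shows False
proof -
  define N where "N = Max {j. x (S j) \<noteq> 0}"
  have xN: "x (S N) \<noteq> 0" unfolding N_def using Max_in[OF finite_SS[OF x] SS] by simp
  have bN: "x (S j) \<noteq> 0 \<Longrightarrow> j \<le> N" for j unfolding N_def using finite_SS[OF x] by (simp add: Max_ge)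
  have N1: "1 \<le> N" using HcarrierD(2)[OF x xN] by simp
  have hb: "x b \<noteq> 0 \<Longrightarrow> (case b of A i \<Rightarrow> False | S j \<Rightarrow> 1 \<le> j \<and> j \<le> N | P r k \<Rightarrow> True)" for b
    using AS bN HcarrierD(2)[OF x, of b] by (cases b) auto
  have fin: "finite (hsupp x)" using x by (rule HcarrierD)
  have ne1: "Suc 0 \<le> j \<and> j \<le> N \<Longrightarrow> (2 * N = j) = False" for j using N1 by auto
  have ne2: "Suc 0 \<le> j \<and> j \<le> N \<Longrightarrow> Suc 0 \<le> l \<and> l \<le> N \<Longrightarrow> (2 * N = j + l) = (j = N \<and> l = N)" for j l by auto
  have ne3: "Suc 0 \<le> j \<and> j \<le> N \<Longrightarrow> Suc 0 \<le> l \<and> l \<le> N \<Longrightarrow> (2 * N = nd (int j) (int l)) = False" for j l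
    unfolding nd_def by auto
  have E: "{(S N, S N)} \<subseteq> hsupp x \<times> hsupp x" using xN by (auto simp: hsupp_def)
  have "hmul x x (S (2 * N)) = (\<Sum>p\<in>{(S N, S N)}. x (fst p) * x (snd p) * bmul (fst p) (snd p) (S (2 * N)))"
  proof (rule hmul_focus[OF x fin order_refl E])
    fix b b' assume "b \<in> hsupp x" "b' \<in> hsupp x" "x b \<noteq> 0" "x b' \<noteq> 0" "(b, b') \<notin> {(S N, S N)}"
    then show "bmul b b' (S (2 * N)) = (0::'a)"
      using hb[of b] hb[of b']
      apply (cases b; cases b')
      apply (simp_all add: ne1 ne2 ne3)
      by blast+
  qed
  also have "\<dots> = x (S N) * x (S N) * (- (3/8))"
  proof -
    have v1: "bmul (S N) (S N) (S (2 * N)) = (- (3/8)::'a)" using N1 by (simp add: nd_def)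
    show ?thesis by (simp del: bmul.simps add: v1)
  qed
  finally have c1: "x (S (2 * N)) = x (S N) * x (S N) * (- (3/8))" using idem by simp
  have c2: "x (S (2 * N)) = 0"
  proof (rule ccontr)
    assume "x (S (2 * N)) \<noteq> 0"
    then have "2 * N \<le> N" by (rule bN)
    then show False using N1 by simp
  qed
  have "(- (3/8) :: 'a) \<noteq> 0" using nz38[OF two three] by simp
  then have c3: "x (S N) * x (S N) * (- (3/8)) \<noteq> 0" using xN by (intro no_zero_divisors)
  show False using c3 unfolding c1[symmetric] c2 by simp
qed

lemma caseIIIa:
  fixes x :: "hidx \<Rightarrow> 'a::field"
  assumes x: "x \<in> Hcarrier" and idem: "hmul x x = x" and two: "(2::'a) \<noteq> 0"
    and SS: "\<And>j. x (S j) = 0" and m: "x (A m) \<noteq> 0" and M: "x (A M) \<noteq> 0" and mM: "m < M"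
  shows False
proof -
  define m0 where "m0 = Min {i. x (A i) \<noteq> 0}"
  define M0 where "M0 = Max {i. x (A i) \<noteq> 0}"
  have ne: "{i. x (A i) \<noteq> 0} \<noteq> {}" using m by auto
  have xm: "x (A m0) \<noteq> 0" unfolding m0_def using Min_in[OF finite_AS[OF x] ne] by simp
  have xM: "x (A M0) \<noteq> 0" unfolding M0_def using Max_in[OF finite_AS[OF x] ne] by simp
  have bm: "x (A i) \<noteq> 0 \<Longrightarrow> m0 \<le> i" for i unfolding m0_def using finite_AS[OF x] by (simp add: Min_le)
  have bM: "x (A i) \<noteq> 0 \<Longrightarrow> i \<le> M0" for i unfolding M0_def using finite_AS[OF x] by (simp add: Max_ge)
  have lt: "m0 < M0" using bm[OF m] bM[OF M] mM by simp
  define d where "d = nat (M0 - m0)"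
  have d1: "1 \<le> d" using lt unfolding d_def by simp
  have hb: "x b \<noteq> 0 \<Longrightarrow> (case b of A i \<Rightarrow> m0 \<le> i \<and> i \<le> M0 | S j \<Rightarrow> False | P r k \<Rightarrow> True)" for b
    using SS bm bM by (cases b) auto
  have fin: "finite (hsupp x)" using x by (rule HcarrierD)
  have ne1: "m0 \<le> i \<and> i \<le> M0 \<Longrightarrow> m0 \<le> i' \<and> i' \<le> M0 \<Longrightarrow>
     (d = nd i i') = ((i = m0 \<and> i' = M0) \<or> (i = M0 \<and> i' = m0))" for i i'
    unfolding d_def nd_def using lt by auto
  have E: "{(A m0, A M0), (A M0, A m0)} \<subseteq> hsupp x \<times> hsupp x" using xm xM by (auto simp: hsupp_def)
  have "hmul x x (S d) = (\<Sum>p\<in>{(A m0, A M0), (A M0, A m0)}. x (fst p) * x (snd p) * bmul (fst p) (snd p) (S d))"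
  proof (rule hmul_focus[OF x fin order_refl E])
    fix b b' assume "b \<in> hsupp x" "b' \<in> hsupp x" "x b \<noteq> 0" "x b' \<noteq> 0" "(b, b') \<notin> {(A m0, A M0), (A M0, A m0)}"
    then show "bmul b b' (S d) = (0::'a)"
      using hb[of b] hb[of b']
      by (cases b; cases b') (simp_all add: ne1)
  qed
  also have "\<dots> = x (A m0) * x (A M0) + x (A M0) * x (A m0)"
  proof -
    have v1: "bmul (A m0) (A M0) (S d) = (1::'a)" using lt d1 by (simp add: ne1 nd_def d_def)
    have v2: "bmul (A M0) (A m0) (S d) = (1::'a)" using lt d1 by (simp add: ne1 nd_def d_def)
    show ?thesis using lt by (simp del: bmul.simps add: v1 v2)
  qed
  also have "\<dots> = 2 * (x (A m0) * x (A M0))"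
    by (simp only: mult_2 mult.commute mult.left_commute)
  finally have c1: "x (S d) = 2 * (x (A m0) * x (A M0))" using idem by simp
  have c3: "2 * (x (A m0) * x (A M0)) \<noteq> 0" using xm xM two by (intro no_zero_divisors)
  show False using c3 unfolding c1[symmetric] SS by simp
qed

lemma quad0:
  fixes a b :: "'a::field"
  assumes two: "(2::'a) \<noteq> 0" and three: "(3::'a) \<noteq> 0"
    and q1: "a*a + 2*a*b - 2*b*b = 0" and q2: "2*a*a - 2*a*b - b*b = 0"
  shows "a = 0 \<and> b = 0"
proof -
  have id: "3 * (a*a - b*b) = (a*a + 2*a*b - 2*b*b) + (2*a*a - 2*a*b - b*b)" by (simp add: algebra_simps)
  have "3 * (a*a - b*b) = 0" unfolding id q1 q2 by simp
  then have sq: "a*a = b*b" using three by simp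
  have id2: "b * (2*a - b) = (a*a + 2*a*b - 2*b*b) + (b*b - a*a)" by (simp add: algebra_simps)
  have "b * (2*a - b) = 0" unfolding id2 q1 using sq by simp
  then have "b = 0 \<or> 2*a - b = 0" by (simp only: mult_eq_0_iff)
  then have "b = 0 \<or> b = 2*a" by auto
  then show ?thesis
  proof
    assume "b = 0" then show ?thesis using sq by simp
  next
    assume b: "b = 2*a"
    have id3: "3 * (a*a) = 4 * (a*a) - a*a" by (simp add: algebra_simps)
    have bb: "b*b = 4*(a*a)" using b by (simp add: algebra_simps)
    have h4: "4*(a*a) = a*a" using sq bb by simp
    have "3 * (a*a) = 0" unfolding id3 h4 by simp
    then have "a = 0" using three by simp
    then show ?thesis using b by simp
  qed
qed

lemma caseP:
  fixes x :: "hidx \<Rightarrow> 'a::field"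
  assumes x: "x \<in> Hcarrier" and idem: "hmul x x = x" and two: "(2::'a) \<noteq> 0" and three: "(3::'a) \<noteq> 0"
    and SS: "\<And>j. x (S j) = 0" and AM: "\<And>i. x (A i) \<noteq> 0 \<Longrightarrow> i = M"
    and PS: "{k. x (P 1 k) \<noteq> 0 \<or> x (P 2 k) \<noteq> 0} \<noteq> {}"
  shows False
proof -
  define K where "K = Max {k. x (P 1 k) \<noteq> 0 \<or> x (P 2 k) \<noteq> 0}"
  have xK: "x (P 1 K) \<noteq> 0 \<or> x (P 2 K) \<noteq> 0" unfolding K_def using Max_in[OF finite_PS[OF x] PS] by simp
  have bK: "x (P 1 k) \<noteq> 0 \<or> x (P 2 k) \<noteq> 0 \<Longrightarrow> k \<le> K" for k unfolding K_def using finite_PS[OF x] by (simp add: Max_ge)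
  have K3: "3 dvd K" "0 < K" using xK HcarrierD(2)[OF x, of "P 1 K"] HcarrierD(2)[OF x, of "P 2 K"] by auto
  have hb: "x b \<noteq> 0 \<Longrightarrow> (case b of A i \<Rightarrow> i = M | S j \<Rightarrow> False | P r k \<Rightarrow> (r = 1 \<or> r = 2) \<and> 3 dvd k \<and> 0 < k \<and> k \<le> K)" for b
    using SS AM bK HcarrierD(2)[OF x, of b] by (cases b) auto
  define F where "F = hsupp x \<union> {P 1 K, P 2 K}"
  have fin: "finite F" unfolding F_def using x HcarrierD(1) by auto
  have E: "{P 1 K, P 2 K} \<times> {P 1 K, P 2 K} \<subseteq> F \<times> F" unfolding F_def by auto
  have ne1: "k \<le> K \<Longrightarrow> (2 * K = k) = False" for k using K3 by auto
  have ne2: "h \<le> K \<Longrightarrow> k \<le> K \<Longrightarrow> (2 * K = h + k) = (h = K \<and> k = K)" for h k by auto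
  have ne3: "h \<le> K \<Longrightarrow> k \<le> K \<Longrightarrow> (2 * K = nd (int h) (int k)) = False" for h k
    using K3 unfolding nd_def by auto
  have ndM: "nd M M = 0" by (simp add: nd_def)
  have KK: "K + K = 2 * K" by simp
  have ndKK: "nd (int K) (int K) = 0" by (simp add: nd_def)
  have coef: "hmul x x (P t (2 * K)) = (\<Sum>p\<in>{P 1 K, P 2 K} \<times> {P 1 K, P 2 K}. x (fst p) * x (snd p) * bmul (fst p) (snd p) (P t (2 * K)))" for t
  proof (rule hmul_focus[OF x fin _ E])
    show "hsupp x \<subseteq> F" unfolding F_def by auto
    fix b b' assume "b \<in> F" "b' \<in> F" "x b \<noteq> 0" "x b' \<noteq> 0" "(b, b') \<notin> {P 1 K, P 2 K} \<times> {P 1 K, P 2 K}"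
    then show "bmul b b' (P t (2 * K)) = (0::'a)"
      using hb[of b] hb[of b']
      by (cases b; cases b') (auto simp: ne1 ne2 ne3 ndM)
  qed
  define e1 where "e1 = x (P 1 K)"
  define e2 where "e2 = x (P 2 K)"
  have z1: "x (P 1 (2 * K)) = 0" using bK[of "2 * K"] K3 by force
  have z2: "x (P 2 (2 * K)) = 0" using bK[of "2 * K"] K3 by force
  have "hmul x x (P 1 (2 * K)) = - (1/8) * (e1*e1 + 2*e1*e2 - 2*e2*e2)"
    unfolding coef using K3
    by (simp add: sum.cartesian_product[symmetric] ndM ndKK KK e1_def e2_def pcoef_def algebra_simps)
  then have q1: "e1*e1 + 2*e1*e2 - 2*e2*e2 = 0" using z1 idem eight_nz[OF two] by simp
  have "hmul x x (P 2 (2 * K)) = - (1/8) * (2*e1*e1 - 2*e1*e2 - e2*e2)"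
    unfolding coef using K3
    by (simp add: sum.cartesian_product[symmetric] ndM ndKK KK e1_def e2_def pcoef_def algebra_simps)
  then have q2: "2*e1*e1 - 2*e1*e2 - e2*e2 = 0" using z2 idem eight_nz[OF two] by simp
  have "e1 = 0 \<and> e2 = 0" by (rule quad0[OF two three q1 q2])
  then show False using xK unfolding e1_def e2_def by simp
qed

lemma xM_one:
  fixes x :: "hidx \<Rightarrow> 'a::field"
  assumes x: "x \<in> Hcarrier" and idem: "hmul x x = x" and two: "(2::'a) \<noteq> 0"
    and SS: "\<And>j. x (S j) = 0" and AM: "\<And>i. x (A i) \<noteq> 0 \<Longrightarrow> i = M" and xM: "x (A M) \<noteq> 0"
  shows "x (A M) = 1"
proof -
  have hb: "x b \<noteq> 0 \<Longrightarrow> (case b of A i \<Rightarrow> i = M | S j \<Rightarrow> False | P r k \<Rightarrow> True)" for b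
    using SS AM by (cases b) auto
  have fin: "finite (hsupp x)" using x by (rule HcarrierD)
  have E: "{(A M, A M)} \<subseteq> hsupp x \<times> hsupp x" using xM by (auto simp: hsupp_def)
  have ndM: "nd M M = 0" by (simp add: nd_def)
  have "hmul x x (A M) = (\<Sum>p\<in>{(A M, A M)}. x (fst p) * x (snd p) * bmul (fst p) (snd p) (A M))"
  proof (rule hmul_focus[OF x fin order_refl E])
    fix b b' assume "b \<in> hsupp x" "b' \<in> hsupp x" "x b \<noteq> 0" "x b' \<noteq> 0" "(b, b') \<notin> {(A M, A M)}"
    then show "bmul b b' (A M) = (0::'a)"
      using hb[of b] hb[of b'] by (cases b; cases b') auto
  qed
  also have "\<dots> = x (A M) * x (A M)" using two by (simp add: ndM)
  finally have "x (A M) * x (A M) = x (A M)" using idem by simp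
  then show ?thesis using xM by simp
qed

lemma idem_class:
  fixes x :: "hidx \<Rightarrow> 'a::field"
  assumes x: "x \<in> Hcarrier" and idem: "hmul x x = x" and two: "(2::'a) \<noteq> 0" and three: "(3::'a) \<noteq> 0"
  shows "x = 0 \<or> (\<exists>i. x = aV i)"
proof -
  have SS: "x (S j) = 0" for j
  proof (rule ccontr)
    assume h: "x (S j) \<noteq> 0"
    then have SS': "{j. x (S j) \<noteq> 0} \<noteq> {}" by auto
    show False
    proof (cases "\<exists>i. x (A i) \<noteq> 0")
      case True then have "{i. x (A i) \<noteq> 0} \<noteq> {}" by auto
      then show False by (rule caseI[OF x idem two three _ SS'])
    next
      case False then show False using caseII[OF x idem two three _ SS'] by auto
    qed
  qed
  have uniq: "x (A i) \<noteq> 0 \<Longrightarrow> x (A i') \<noteq> 0 \<Longrightarrow> i = i'" for i i'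
  proof (rule ccontr)
    assume h: "x (A i) \<noteq> 0" "x (A i') \<noteq> 0" "i \<noteq> i'"
    show False
    proof (cases "i < i'")
      case True then show False by (rule caseIIIa[OF x idem two SS h(1,2)])
    next
      case False then have "i' < i" using h(3) by simp
      then show False by (rule caseIIIa[OF x idem two SS h(2,1)])
    qed
  qed
  have PS: "x (P r k) = 0" if AM: "\<And>i. x (A i) \<noteq> 0 \<Longrightarrow> i = M" for r k M
  proof (rule ccontr)
    assume h: "x (P r k) \<noteq> 0"
    then have "r = 1 \<or> r = 2" using HcarrierD(2)[OF x h] by simp
    then have "{k. x (P 1 k) \<noteq> 0 \<or> x (P 2 k) \<noteq> 0} \<noteq> {}" using h by auto
    then show False using caseP[OF x idem two three SS AM] by simp
  qed
  show ?thesis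
  proof (cases "\<exists>M. x (A M) \<noteq> 0")
    case False
    then have AM: "\<And>i. x (A i) \<noteq> 0 \<Longrightarrow> i = 0" by auto
    have "x = 0"
    proof (rule ext)
      fix b show "x b = 0 b" using False SS PS[OF AM] by (cases b) auto
    qed
    then show ?thesis by simp
  next
    case True
    then obtain M where xM: "x (A M) \<noteq> 0" by auto
    have AM: "\<And>i. x (A i) \<noteq> 0 \<Longrightarrow> i = M" using uniq xM by blast
    have one: "x (A M) = 1" by (rule xM_one[OF x idem two SS AM xM])
    have "x = aV M"
    proof (rule ext)
      fix b show "x b = aV M b" using one AM SS PS[OF AM] by (cases b) auto
    qed
    then show ?thesis by auto
  qed
qed

definition aff :: "int \<Rightarrow> int \<Rightarrow> int \<Rightarrow> int" where "aff c e = (\<lambda>i. c + e * i)"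

definition affs :: "(int \<Rightarrow> int) set" where
  "affs = {f. \<exists>c e. (e = 1 \<or> e = -1) \<and> f = aff c e}"

lemma aff_inv: "e = 1 \<or> e = -1 \<Longrightarrow> aff c e (aff (- e * c) e x) = x"
  unfolding aff_def by (auto simp: algebra_simps)

lemma aff_Bij: "e = 1 \<or> e = -1 \<Longrightarrow> aff c e \<in> Bij UNIV"
proof -
  assume e: "e = 1 \<or> e = -1"
  have cc: "- e * (- e * c) = c" using e by auto
  have "bij_betw (aff c e) UNIV UNIV"
    apply (rule bij_betw_byWitness[where f' = "aff (- e * c) e"])
    using aff_inv[OF e] aff_inv[OF e, of "- e * c", unfolded cc] by auto
  then show ?thesis by (simp add: Bij_def)
qed

lemma affs_Bij: "f \<in> affs \<Longrightarrow> f \<in> Bij UNIV"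
  unfolding affs_def using aff_Bij by auto

lemma mult_aff: "e1 = 1 \<or> e1 = -1 \<Longrightarrow> e2 = 1 \<or> e2 = -1 \<Longrightarrow>
   aff c1 e1 \<otimes>\<^bsub>BijGroup UNIV\<^esub> aff c2 e2 = aff (c1 + e1 * c2) (e1 * e2)"
  using aff_Bij[of e1 c1] aff_Bij[of e2 c2]
  by (simp add: BijGroup_def compose_def aff_def fun_eq_iff algebra_simps)

lemma inv_aff: "e = 1 \<or> e = -1 \<Longrightarrow> inv\<^bsub>BijGroup UNIV\<^esub> (aff c e) = aff (- e * c) e"
proof -
  assume e: "e = 1 \<or> e = -1"
  have cc: "- e * (- e * c) = c" using e by auto
  have "inv\<^bsub>BijGroup UNIV\<^esub> (aff c e) = (\<lambda>x\<in>UNIV. inv_into UNIV (aff c e) x)"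
    by (rule inv_BijGroup[OF aff_Bij[OF e]])
  also have "\<dots> = aff (- e * c) e"
  proof (rule ext)
    fix x
    have "inv_into UNIV (aff c e) x = aff (- e * c) e x"
      apply (rule inv_into_f_eq)
      using aff_Bij[OF e] aff_inv[OF e] by (auto simp: Bij_def bij_betw_def)
    then show "(\<lambda>x\<in>UNIV. inv_into UNIV (aff c e) x) x = aff (- e * c) e x" by simp
  qed
  finally show ?thesis .
qed

lemma one_aff: "\<one>\<^bsub>BijGroup UNIV\<^esub> = aff 0 1"
  by (simp add: BijGroup_def aff_def fun_eq_iff)

lemma tau0_aff: "tau0 = aff 0 (-1)" by (simp add: tau0_def aff_def fun_eq_iff)
lemma tauh_aff: "tau_half = aff 1 (-1)" by (simp add: tau_half_def aff_def fun_eq_iff)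

lemma gen_sub: "f \<in> generate (BijGroup UNIV) {tau0, tau_half} \<Longrightarrow> f \<in> affs"
proof (induction rule: generate.induct)
  case one
  have "(1::int) = 1 \<or> (1::int) = -1" by simp
  then show ?case unfolding one_aff affs_def by blast
next
  case (incl h)
  have "(-1::int) = 1 \<or> (-1::int) = -1" by simp
  then show ?case using incl unfolding affs_def tau0_aff tauh_aff by blast
next
  case (inv h)
  have m1: "(-1::int) = 1 \<or> (-1::int) = -1" by simp
  have "h = aff 0 (-1) \<or> h = aff 1 (-1)" using inv unfolding tau0_aff tauh_aff by auto
  then show ?case unfolding affs_def using inv_aff[OF m1] m1 by blast
next
  case (eng h1 h2)
  then obtain c1 e1 c2 e2 where "e1 = 1 \<or> e1 = -1" "h1 = aff c1 e1" "e2 = 1 \<or> e2 = -1" "h2 = aff c2 e2"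
    unfolding affs_def by auto
  then have m: "h1 \<otimes>\<^bsub>BijGroup UNIV\<^esub> h2 = aff (c1 + e1*c2) (e1*e2)" by (simp add: mult_aff)
  have ee: "e1*e2 = 1 \<or> e1*e2 = -1" using \<open>e1 = 1 \<or> e1 = -1\<close> \<open>e2 = 1 \<or> e2 = -1\<close> by auto
  show ?case unfolding affs_def m using ee by blast
qed

abbreviation "Gen \<equiv> generate (BijGroup (UNIV::int set)) {tau0, tau_half}"

lemma T1_gen: "aff 1 1 \<in> Gen"
proof -
  have "tau_half \<otimes>\<^bsub>BijGroup UNIV\<^esub> tau0 \<in> Gen" by (intro generate.eng generate.incl) auto
  then show ?thesis unfolding tau0_aff tauh_aff by (simp add: mult_aff)
qed

lemma Tm1_gen: "aff (-1) 1 \<in> Gen"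
proof -
  have "tau0 \<otimes>\<^bsub>BijGroup UNIV\<^esub> tau_half \<in> Gen" by (intro generate.eng generate.incl) auto
  then show ?thesis unfolding tau0_aff tauh_aff by (simp add: mult_aff)
qed

lemma Tpos_gen: "aff (int n) 1 \<in> Gen"
proof (induction n)
  case 0
  have "\<one>\<^bsub>BijGroup UNIV\<^esub> \<in> Gen" by (rule generate.one)
  then show ?case by (simp add: one_aff)
next
  case (Suc n)
  have "aff 1 1 \<otimes>\<^bsub>BijGroup UNIV\<^esub> aff (int n) 1 \<in> Gen" by (intro generate.eng T1_gen Suc)
  then show ?case by (simp add: mult_aff add.commute)
qed

lemma Tneg_gen: "aff (- int n) 1 \<in> Gen"
proof (induction n)
  case 0
  have "\<one>\<^bsub>BijGroup UNIV\<^esub> \<in> Gen" by (rule generate.one)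
  then show ?case by (simp add: one_aff)
next
  case (Suc n)
  have "aff (-1) 1 \<otimes>\<^bsub>BijGroup UNIV\<^esub> aff (- int n) 1 \<in> Gen" by (intro generate.eng Tm1_gen Suc)
  then show ?case by (simp add: mult_aff algebra_simps)
qed

lemma T_gen: "aff c 1 \<in> Gen"
proof (cases "c \<ge> 0")
  case True then show ?thesis using Tpos_gen[of "nat c"] by simp
next
  case False then show ?thesis using Tneg_gen[of "nat (- c)"] by simp
qed

lemma affs_sub: "f \<in> affs \<Longrightarrow> f \<in> Gen"
proof -
  assume "f \<in> affs"
  then obtain c e where e: "e = 1 \<or> e = -1" and f: "f = aff c e" unfolding affs_def by auto
  show ?thesis using e
  proof
    assume "e = 1" then show ?thesis using f T_gen by simp
  next
    assume e1: "e = -1"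
    have "aff c 1 \<otimes>\<^bsub>BijGroup UNIV\<^esub> tau0 \<in> Gen" by (intro generate.eng T_gen generate.incl) auto
    then show ?thesis unfolding tau0_aff using f e1 by (simp add: mult_aff)
  qed
qed

lemma gen_eq: "Gen = affs" using gen_sub affs_sub by blast

lemma Hauts_lin: "\<phi> \<in> Hauts \<Longrightarrow> lin \<phi>" by (simp add: Hauts_def lin_def)
lemma Hauts_Hc: "\<phi> \<in> Hauts \<Longrightarrow> x \<in> Hcarrier \<Longrightarrow> \<phi> x \<in> Hcarrier"
  by (auto simp: Hauts_def bij_betw_def)
lemma Hauts_inj: "\<phi> \<in> Hauts \<Longrightarrow> x \<in> Hcarrier \<Longrightarrow> y \<in> Hcarrier \<Longrightarrow> \<phi> x = \<phi> y \<Longrightarrow> x = y"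
  by (auto simp: Hauts_def bij_betw_def inj_on_def)
lemma Hauts_mul: "\<phi> \<in> Hauts \<Longrightarrow> x \<in> Hcarrier \<Longrightarrow> y \<in> Hcarrier \<Longrightarrow> \<phi> (hmul x y) = hmul (\<phi> x) (\<phi> y)"
  by (simp add: Hauts_def)
lemma Hauts_surj: "\<phi> \<in> Hauts \<Longrightarrow> y \<in> Hcarrier \<Longrightarrow> \<exists>x\<in>Hcarrier. \<phi> x = y"
proof -
  assume p: "\<phi> \<in> Hauts" and y: "y \<in> Hcarrier"
  have "\<phi> ` Hcarrier = Hcarrier" using p by (simp add: Hauts_def bij_betw_def)
  then have "y \<in> \<phi> ` Hcarrier" using y by simp
  then obtain x where "x \<in> Hcarrier" "y = \<phi> x" by (rule imageE)
  then show ?thesis by blast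
qed
lemma Hauts_ext: "\<phi> \<in> Hauts \<Longrightarrow> \<phi> \<in> extensional Hcarrier"
  by (simp add: Hauts_def)
lemma Hauts_Bij: "\<phi> \<in> Hauts \<Longrightarrow> \<phi> \<in> Bij Hcarrier"
  by (simp add: Hauts_def Bij_def)

lemma aV_inj: "(aV i :: hidx \<Rightarrow> 'a::field) = aV j \<Longrightarrow> i = j"
  by (drule fun_cong[of _ _ "A i"]) (auto split: if_splits)

lemma aV_nz: "(aV i :: hidx \<Rightarrow> 'a::field) \<noteq> 0"
  by (auto simp: fun_eq_iff dest: spec[of _ "A i"])

lemma aV_idem: "(2::'a::field) \<noteq> 0 \<Longrightarrow> hmul (aV i) (aV i) = (aV i :: hidx \<Rightarrow> 'a)"
  by (simp add: hmul_aa nd_def fun_eq_iff)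

lemma Hauts_aV:
  fixes \<phi> :: "(hidx \<Rightarrow> 'a::field) \<Rightarrow> _"
  assumes p: "\<phi> \<in> Hauts" and two: "(2::'a) \<noteq> 0" and three: "(3::'a) \<noteq> 0"
  shows "\<exists>j. \<phi> (aV i) = aV j"
proof -
  have y: "\<phi> (aV i) \<in> Hcarrier" by (rule Hauts_Hc[OF p Hc_aV])
  have "hmul (\<phi> (aV i)) (\<phi> (aV i)) = \<phi> (aV i)"
    using Hauts_mul[OF p Hc_aV Hc_aV, of i i] aV_idem[OF two] by simp
  then have "\<phi> (aV i) = 0 \<or> (\<exists>j. \<phi> (aV i) = aV j)" by (rule idem_class[OF y _ two three])
  moreover have "\<phi> (aV i) \<noteq> 0"
  proof
    assume "\<phi> (aV i) = 0"
    then have "\<phi> (aV i) = \<phi> 0" using lin_zero[OF Hauts_lin[OF p]] by simp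
    then have "aV i = (0 :: hidx \<Rightarrow> 'a)" by (rule Hauts_inj[OF p Hc_aV Hc_zero])
    then show False using aV_nz by blast
  qed
  ultimately show ?thesis by blast
qed

definition Psi :: "((hidx \<Rightarrow> 'a::field) \<Rightarrow> (hidx \<Rightarrow> 'a)) \<Rightarrow> int \<Rightarrow> int" where
  "Psi \<phi> = (\<lambda>i. THE j. \<phi> (aV i) = aV j)"

lemma Psi_prop:
  fixes \<phi> :: "(hidx \<Rightarrow> 'a::field) \<Rightarrow> _"
  assumes p: "\<phi> \<in> Hauts" and two: "(2::'a) \<noteq> 0" and three: "(3::'a) \<noteq> 0"
  shows "\<phi> (aV i) = aV (Psi \<phi> i)"
proof -
  obtain j where j: "\<phi> (aV i) = aV j" using Hauts_aV[OF p two three] by blast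
  have "Psi \<phi> i = j" unfolding Psi_def
    by (rule the_equality) (use j aV_inj in auto)
  then show ?thesis using j by simp
qed

lemma Psi_Lm: "e = 1 \<or> e = -1 \<Longrightarrow> Psi (Lm c e :: (hidx \<Rightarrow> 'a::field) \<Rightarrow> _) = aff c e"
  unfolding Psi_def aff_def
  by (rule ext, rule the_equality) (auto simp: Lm_aV dest: aV_inj)

lemma dist_aff:
  fixes g :: "int \<Rightarrow> int"
  assumes inj: "\<And>i j. g i = g j \<Longrightarrow> i = j" and surj: "\<And>j. \<exists>i. g i = j"
    and adj: "\<And>i. nat \<bar>g i - g (i+1)\<bar> = D"
  shows "g \<in> affs"
proof -
  have step: "int D dvd g (i+1) - g i" for i
  proof -
    have "\<bar>g (i+1) - g i\<bar> = int D" using adj[of i] by simp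
    then have "int D dvd \<bar>g (i+1) - g i\<bar>" by simp
    then show ?thesis by (simp only: dvd_abs_iff)
  qed
  have md: "int D dvd g i - g 0" for i
  proof (induction i rule: int_induct[where k=0])
    case base then show ?case by simp
  next
    case (step1 i)
    have "g (i + 1) - g 0 = (g (i+1) - g i) + (g i - g 0)" by simp
    moreover have "int D dvd (g (i+1) - g i) + (g i - g 0)" by (rule dvd_add[OF step[of i] step1(2)])
    ultimately show ?case by simp
  next
    case (step2 i)
    have "g (i - 1) - g 0 = (g i - g 0) - (g (i - 1 + 1) - g (i - 1))" by simp
    moreover have "int D dvd (g i - g 0) - (g (i - 1 + 1) - g (i - 1))" by (rule dvd_diff[OF step2(2) step[of "i - 1"]])
    ultimately show ?case by simp
  qed
  obtain i1 where i1: "g i1 = g 0 + 1" using surj[of "g 0 + 1"] by (elim exE)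
  have "int D dvd 1" using md[of i1] i1 by simp
  then have D1: "D = 1" by simp
  have pm: "g (i+1) - g i = 1 \<or> g (i+1) - g i = -1" for i using adj[of i] D1 by auto
  define e where "e = g 1 - g 0"
  have e: "e = 1 \<or> e = -1" unfolding e_def using pm[of 0] by simp
  have cst: "g (i+1) - g i = e" for i
  proof (induction i rule: int_induct[where k=0])
    case base then show ?case by (simp add: e_def)
  next
    case (step1 i)
    show ?case
    proof (rule ccontr)
      assume "g (i + 1 + 1) - g (i + 1) \<noteq> e"
      then have "g (i + 1 + 1) - g (i + 1) = - e" using pm[of "i+1"] e by auto
      then have "g (i + 1 + 1) = g i" using step1(2) by simp
      then have "i + 1 + 1 = i" by (rule inj)
      then show False by simp
    qed
  next
    case (step2 i)
    show ?case
    proof (rule ccontr)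
      assume "g (i - 1 + 1) - g (i - 1) \<noteq> e"
      then have "g (i - 1 + 1) - g (i - 1) = - e" using pm[of "i - 1"] e by auto
      then have "g (i - 1) = g (i + 1)" using step2(2) by simp
      then have "i - 1 = i + 1" by (rule inj)
      then show False by simp
    qed
  qed
  have cf: "g i = g 0 + e * i" for i
  proof (induction i rule: int_induct[where k=0])
    case base then show ?case by simp
  next
    case (step1 i) then show ?case using cst[of i] by (simp add: algebra_simps)
  next
    case (step2 i) then show ?case using cst[of "i - 1"] by (simp add: algebra_simps)
  qed
  have "g = aff (g 0) e" unfolding aff_def by (rule ext) (rule cf)
  then show ?thesis unfolding affs_def using e by blast
qed

lemma hmul_adj: "hmul (aV i) (aV (i+1)) = (vsc (1/2) (aV i + aV (i+1)) + sV 1 :: hidx \<Rightarrow> 'a::field)"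
proof -
  have "nd i (i+1) = 1" by (simp add: nd_def)
  moreover have "zV i 1 = (0 :: hidx \<Rightarrow> 'a)" by (simp add: zV_def pV_def)
  ultimately show ?thesis by (simp add: hmul_aa)
qed

lemma nd_zero: "nd a b = 0 \<longleftrightarrow> a = b" by (auto simp: nd_def)

lemma Psi_affs:
  fixes \<phi> :: "(hidx \<Rightarrow> 'a::field) \<Rightarrow> _"
  assumes p: "\<phi> \<in> Hauts" and two: "(2::'a) \<noteq> 0" and three: "(3::'a) \<noteq> 0"
  shows "Psi \<phi> \<in> affs"
proof -
  define g where "g = Psi \<phi>"
  have pr: "\<phi> (aV i) = aV (g i)" for i unfolding g_def by (rule Psi_prop[OF p two three])
  have inj: "g i = g j \<Longrightarrow> i = j" for i j
  proof -
    assume "g i = g j"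
    then have "\<phi> (aV i) = \<phi> (aV j)" using pr by simp
    then have "aV i = (aV j :: hidx \<Rightarrow> 'a)" by (rule Hauts_inj[OF p Hc_aV Hc_aV])
    then show "i = j" by (rule aV_inj)
  qed
  have surj: "\<exists>i. g i = j" for j
  proof -
    obtain y where y: "y \<in> Hcarrier" "\<phi> y = aV j" using Hauts_surj[OF p Hc_aV] by blast
    have "\<phi> (hmul y y) = \<phi> y" using Hauts_mul[OF p y(1) y(1)] y(2) aV_idem[OF two] by simp
    then have idem: "hmul y y = y" by (rule Hauts_inj[OF p Hc_hmul[OF y(1) y(1)] y(1)])
    have "y \<noteq> 0"
    proof
      assume "y = 0"
      then have "aV j = (0 :: hidx \<Rightarrow> 'a)" using y(2) lin_zero[OF Hauts_lin[OF p]] by simp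
      then show False using aV_nz by blast
    qed
    then obtain i where "y = aV i" using idem_class[OF y(1) idem two three] by blast
    then have "aV (g i) = (aV j :: hidx \<Rightarrow> 'a)" using y(2) pr by simp
    then show ?thesis using aV_inj by blast
  qed
  define F1 where "F1 = \<phi> (sV 1)"
  have key: "F1 = sV (nd (g i) (g (i+1))) + zV (g i) (nd (g i) (g (i+1)))" for i
  proof -
    have a: "\<phi> (hmul (aV i) (aV (i+1))) = vsc (1/2) (aV (g i) + aV (g (i+1))) + F1"
      unfolding hmul_adj F1_def
      by (simp add: lin_add[OF Hauts_lin[OF p]] lin_vsc[OF Hauts_lin[OF p]] HcS pr)
    have b: "\<phi> (hmul (aV i) (aV (i+1))) = vsc (1/2) (aV (g i) + aV (g (i+1))) + (sV (nd (g i) (g (i+1))) + zV (g i) (nd (g i) (g (i+1))))"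
      by (subst Hauts_mul[OF p Hc_aV Hc_aV]) (simp add: pr hmul_aa add.assoc)
    show ?thesis using a b by simp
  qed
  have dnz: "nd (g i) (g (i+1)) \<noteq> 0" for i using inj[of i "i+1"] by (auto simp: nd_zero)
  have F1S: "F1 (S m) = (if m = nd (g i) (g (i+1)) then 1 else 0)" for i m
    using key[of i] dnz[of i] by simp
  have dconst: "nd (g i) (g (i+1)) = nd (g 0) (g 1)" for i
    using F1S[of "nd (g 0) (g 1)" i] F1S[of "nd (g 0) (g 1)" 0] by (auto split: if_splits)
  have "g \<in> affs"
  proof (rule dist_aff[OF inj surj, of "nd (g 0) (g 1)"])
    fix i show "nat \<bar>g i - g (i + 1)\<bar> = nd (g 0) (g 1)" using dconst[of i] unfolding nd_def[of "g i"] .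
  qed
  then show ?thesis unfolding g_def .
qed

lemma tdef: "j > 0 \<Longrightarrow> hmul (aV i) (aV (i + int j)) - vsc (1/2) (aV i + aV (i + int j)) = (sV j + zV i j :: hidx \<Rightarrow> 'a::field)"
proof -
  assume "j > 0"
  have "nd i (i + int j) = j" by (simp add: nd_def)
  then show ?thesis by (simp add: hmul_aa fun_eq_iff)
qed

lemma P1_expr: "3 dvd j \<Longrightarrow> 0 < j \<Longrightarrow> (3::'a::field) \<noteq> 0 \<Longrightarrow>
  vsc (1/3) ((sV j + zV 0 j) - (sV j + zV 2 j)) = (evec (P 1 j) :: hidx \<Rightarrow> 'a)"
  by (rule ext, case_tac x) (auto simp: pcoef_def)

lemma P2_expr: "3 dvd j \<Longrightarrow> 0 < j \<Longrightarrow> (3::'a::field) \<noteq> 0 \<Longrightarrow>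
  vsc (1/3) ((sV j + zV 1 j) - (sV j + zV 0 j)) = (evec (P 2 j) :: hidx \<Rightarrow> 'a)"
  by (rule ext, case_tac x) (auto simp: pcoef_def)

lemma S_expr3: "3 dvd j \<Longrightarrow> 0 < j \<Longrightarrow>
  (sV j + zV 0 j) - evec (P 1 j) + evec (P 2 j) = (evec (S j) :: hidx \<Rightarrow> 'a::field)"
  by (rule ext, case_tac x) (auto simp: pcoef_def)

lemma S_expr: "\<not> 3 dvd j \<Longrightarrow> 0 < j \<Longrightarrow> (sV j + zV 0 j) = (evec (S j) :: hidx \<Rightarrow> 'a::field)"
  by (rule ext, case_tac x) (auto simp: pcoef_def)

lemma Psi_inj:
  fixes \<phi> \<psi> :: "(hidx \<Rightarrow> 'a::field) \<Rightarrow> _"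
  assumes p: "\<phi> \<in> Hauts" and q: "\<psi> \<in> Hauts" and two: "(2::'a) \<noteq> 0" and three: "(3::'a) \<noteq> 0"
    and eq: "Psi \<phi> = Psi \<psi>"
  shows "\<phi> = \<psi>"
proof -
  define Q where "Q v \<longleftrightarrow> v \<in> Hcarrier \<and> \<phi> v = \<psi> v" for v
  have Qadd: "Q u \<Longrightarrow> Q w \<Longrightarrow> Q (u + w)" for u w
    unfolding Q_def by (simp add: Hc_add lin_add[OF Hauts_lin[OF p]] lin_add[OF Hauts_lin[OF q]])
  have Qdiff: "Q u \<Longrightarrow> Q w \<Longrightarrow> Q (u - w)" for u w
    unfolding Q_def by (simp add: Hc_diff lin_diff[OF Hauts_lin[OF p]] lin_diff[OF Hauts_lin[OF q]])
  have Qvsc: "Q u \<Longrightarrow> Q (vsc c u)" for u c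
    unfolding Q_def by (simp add: Hc_vsc lin_vsc[OF Hauts_lin[OF p]] lin_vsc[OF Hauts_lin[OF q]])
  have Qmul: "Q u \<Longrightarrow> Q w \<Longrightarrow> Q (hmul u w)" for u w
    unfolding Q_def by (simp add: Hc_hmul Hauts_mul[OF p] Hauts_mul[OF q])
  have QaV: "Q (aV i)" for i
    unfolding Q_def using Psi_prop[OF p two three, of i] Psi_prop[OF q two three, of i] eq by (simp add: Hc_aV)
  have Qt: "j > 0 \<Longrightarrow> Q (sV j + zV i j)" for i j
    using tdef[of j i] Qdiff[OF Qmul[OF QaV QaV] Qvsc[OF Qadd[OF QaV QaV]]] by metis
  have Qb: "Q (evec b)" if vb: "valid_idx b" for b
  proof (cases b)
    case (A i) then show ?thesis using QaV[of i] by (simp add: aV_def)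
  next
    case (S j)
    then have j: "j > 0" using vb by simp
    show ?thesis
    proof (cases "3 dvd j")
      case True
      have "Q ((sV j + zV 0 j) - vsc (1/3) ((sV j + zV 0 j) - (sV j + zV 2 j)) + vsc (1/3) ((sV j + zV 1 j) - (sV j + zV 0 j)))"
        by (intro Qadd Qdiff Qvsc Qt j)
      then show ?thesis unfolding S P1_expr[OF True j three] P2_expr[OF True j three] S_expr3[OF True j] .
    next
      case False
      show ?thesis using Qt[OF j, of 0] unfolding S S_expr[OF False j] .
    qed
  next
    case (P r k)
    then have k: "3 dvd k" "k > 0" "r = 1 \<or> r = 2" using vb by auto
    have Q1: "Q (evec (P 1 k))"
      using Qvsc[OF Qdiff[OF Qt[OF k(2), of 0] Qt[OF k(2), of 2]], of "1/3"] unfolding P1_expr[OF k(1,2) three] .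
    have Q2: "Q (evec (P 2 k))"
      using Qvsc[OF Qdiff[OF Qt[OF k(2), of 1] Qt[OF k(2), of 0]], of "1/3"] unfolding P2_expr[OF k(1,2) three] .
    show ?thesis using k(3) Q1 Q2 P by auto
  qed
  have agree: "\<phi> v = \<psi> v" if v: "v \<in> Hcarrier" for v
    by (rule lin_eqI[OF Hauts_lin[OF p] Hauts_lin[OF q] _ v]) (use Qb in \<open>simp add: Q_def\<close>)
  show ?thesis by (rule extensionalityI[OF Hauts_ext[OF p] Hauts_ext[OF q]]) (rule agree)
qed

lemma Psi_comp:
  fixes \<phi> \<psi> :: "(hidx \<Rightarrow> 'a::field) \<Rightarrow> _"
  assumes p: "\<phi> \<in> Hauts" and q: "\<psi> \<in> Hauts" and two: "(2::'a) \<noteq> 0" and three: "(3::'a) \<noteq> 0"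
  shows "Psi (compose Hcarrier \<phi> \<psi>) = compose UNIV (Psi \<phi>) (Psi \<psi>)"
proof (rule ext)
  fix i
  have c: "compose Hcarrier \<phi> \<psi> (aV i) = aV (Psi \<phi> (Psi \<psi> i))"
    using Psi_prop[OF q two three, of i] Psi_prop[OF p two three, of "Psi \<psi> i"]
    by (simp add: compose_def Hc_aV)
  have "Psi (compose Hcarrier \<phi> \<psi>) i = (THE j. compose Hcarrier \<phi> \<psi> (aV i) = (aV j :: hidx \<Rightarrow> 'a))"
    by (simp add: Psi_def)
  also have "\<dots> = Psi \<phi> (Psi \<psi> i)"
  proof (rule the_equality)
    show "compose Hcarrier \<phi> \<psi> (aV i) = (aV (Psi \<phi> (Psi \<psi> i)) :: hidx \<Rightarrow> 'a)" by (rule c)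
    fix j assume "compose Hcarrier \<phi> \<psi> (aV i) = (aV j :: hidx \<Rightarrow> 'a)"
    then have "(aV j :: hidx \<Rightarrow> 'a) = aV (Psi \<phi> (Psi \<psi> i))" using c by simp
    then show "j = Psi \<phi> (Psi \<psi> i)" by (rule aV_inj)
  qed
  finally have "Psi (compose Hcarrier \<phi> \<psi>) i = Psi \<phi> (Psi \<psi> i)" .
  then show "Psi (compose Hcarrier \<phi> \<psi>) i = compose UNIV (Psi \<phi>) (Psi \<psi>) i"
    by (simp add: compose_def)
qed

theorem proposition3p7:
  assumes "(2::'a::field) \<noteq> 0" and "(3::'a) \<noteq> 0"
  shows "(HAutGroup :: ((hidx \<Rightarrow> 'a) \<Rightarrow> (hidx \<Rightarrow> 'a)) monoid) \<cong> DGroup"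
proof -
  note two = assms(1) and three = assms(2)
  have cH: "carrier (HAutGroup :: ((hidx \<Rightarrow> 'a) \<Rightarrow> (hidx \<Rightarrow> 'a)) monoid) = Hauts"
    by (simp add: HAutGroup_def BijGroup_def)
  have cD: "carrier DGroup = Gen" by (simp add: DGroup_def BijGroup_def)
  have mH: "\<phi> \<otimes>\<^bsub>(HAutGroup :: ((hidx \<Rightarrow> 'a) \<Rightarrow> (hidx \<Rightarrow> 'a)) monoid)\<^esub> \<psi> = compose Hcarrier \<phi> \<psi>"
    if "\<phi> \<in> Hauts" "\<psi> \<in> Hauts" for \<phi> \<psi> :: "(hidx \<Rightarrow> 'a) \<Rightarrow> _"
    using Hauts_Bij[OF that(1)] Hauts_Bij[OF that(2)] by (simp add: HAutGroup_def BijGroup_def)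
  have mD: "f \<otimes>\<^bsub>DGroup\<^esub> g = compose UNIV f g" if "f \<in> Gen" "g \<in> Gen" for f g
    using affs_Bij that gen_eq by (simp add: DGroup_def BijGroup_def)
  have PsiG: "Psi \<phi> \<in> Gen" if "\<phi> \<in> Hauts" for \<phi> :: "(hidx \<Rightarrow> 'a) \<Rightarrow> _"
    using Psi_affs[OF that two three] gen_eq by simp
  have "Psi \<in> iso (HAutGroup :: ((hidx \<Rightarrow> 'a) \<Rightarrow> (hidx \<Rightarrow> 'a)) monoid) DGroup"
    unfolding iso_def hom_def cH cD
  proof (intro CollectI conjI ballI)
    show "Psi \<in> (Hauts :: ((hidx \<Rightarrow> 'a) \<Rightarrow> (hidx \<Rightarrow> 'a)) set) \<rightarrow> Gen" using PsiG by auto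
  next
    fix \<phi> \<psi> :: "(hidx \<Rightarrow> 'a) \<Rightarrow> _" assume "\<phi> \<in> Hauts" "\<psi> \<in> Hauts"
    then show "Psi (\<phi> \<otimes>\<^bsub>HAutGroup\<^esub> \<psi>) = Psi \<phi> \<otimes>\<^bsub>DGroup\<^esub> Psi \<psi>"
      by (simp add: mH mD PsiG Psi_comp two three)
  next
    show "bij_betw Psi (Hauts :: ((hidx \<Rightarrow> 'a) \<Rightarrow> (hidx \<Rightarrow> 'a)) set) Gen"
      unfolding bij_betw_def
    proof
      show "inj_on Psi (Hauts :: ((hidx \<Rightarrow> 'a) \<Rightarrow> (hidx \<Rightarrow> 'a)) set)"
        using Psi_inj[OF _ _ two three] by (auto simp: inj_on_def)
      show "Psi ` (Hauts :: ((hidx \<Rightarrow> 'a) \<Rightarrow> (hidx \<Rightarrow> 'a)) set) = Gen"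
      proof
        show "Psi ` (Hauts :: ((hidx \<Rightarrow> 'a) \<Rightarrow> (hidx \<Rightarrow> 'a)) set) \<subseteq> Gen" using PsiG by auto
        show "Gen \<subseteq> Psi ` (Hauts :: ((hidx \<Rightarrow> 'a) \<Rightarrow> (hidx \<Rightarrow> 'a)) set)"
        proof
          fix f assume "f \<in> Gen"
          then obtain c e where e: "e = 1 \<or> e = -1" and f: "f = aff c e" using gen_eq unfolding affs_def by auto
          have "Lm c e \<in> (Hauts :: ((hidx \<Rightarrow> 'a) \<Rightarrow> (hidx \<Rightarrow> 'a)) set)" by (rule Lm_Hauts[OF e])
          moreover have "Psi (Lm c e :: (hidx \<Rightarrow> 'a) \<Rightarrow> _) = f" using Psi_Lm[OF e] f by simp
          ultimately show "f \<in> Psi ` (Hauts :: ((hidx \<Rightarrow> 'a) \<Rightarrow> (hidx \<Rightarrow> 'a)) set)" by force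
        qed
      qed
    qed
  qed
  then show ?thesis unfolding is_iso_def by blast
qed


end
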